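(* Let $A$ be a linear Nakayama algebra with $n$ simple modules and Jacobson radical $J$. Then $$\dim_K\operatorname{Ext}^1_A(J,J)=n-\big|\{\,i\in\{0,\dots,n-1\} : \operatorname{id}(e_iJ)\le 1\,\}\big|,$$ where $\operatorname{id}$ denotes injective dimension (the zero module being counted as having injective dimension at most one).
   Context: $K$ is a field; a linear Nakayama algebra with $n$ simple modules is a connected algebra $A=KQ/I$ with $Q$ the quiver $0\to1\to\cdots\to n-1$ and $I$ admissible; modules are finite-dimensional right modules, $e_0,\dots,e_{n-1}$ are the primitive idempotents, so $e_iJ$ is the radical of the indecomposable projective $e_iA$ (note $e_{n-1}J=0$). *)

theory Defs
  imports Main "HOL.Vector_Spaces" "HOL-Library.Function_Algebras"
begin

text \<open>The admissible ideal I of K Q, Q = 0 -> 1 -> ... -> n-1, is described by the set Z of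
  pairs (i,j) such that the (unique) path from i to j lies in I.  Every ideal of K Q is
  spanned by the paths it contains (there is at most one path between two vertices);
  it is a two-sided ideal iff Z is closed under extending paths, and admissible
  (R^m contained in I contained in R^2) iff it contains no trivial paths and no arrows
  (R^n = 0 automatically since Q is finite and acyclic).\<close>

definition lin_nakayama_ideal :: "nat \<Rightarrow> (nat \<times> nat) set \<Rightarrow> bool" where
  "lin_nakayama_ideal n Z \<longleftrightarrow>
     Z \<subseteq> {(i,j). i + 2 \<le> j \<and> j < n} \<and>
     (\<forall>i j i' j'. (i,j) \<in> Z \<longrightarrow> i' \<le> i \<longrightarrow> j \<le> j' \<longrightarrow> j' < n \<longrightarrow> (i',j') \<in> Z)"

text \<open>Matrices over the field are functions row => column => entry, vectors are
  functions index => entry; sizes are tracked explicitly.\<close>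

definition mmul :: "nat \<Rightarrow> (nat \<Rightarrow> nat \<Rightarrow> 'k::field) \<Rightarrow> (nat \<Rightarrow> nat \<Rightarrow> 'k) \<Rightarrow> nat \<Rightarrow> nat \<Rightarrow> 'k" where
  "mmul k A B = (\<lambda>r c. \<Sum>t<k. A r t * B t c)"

definition idm :: "nat \<Rightarrow> nat \<Rightarrow> nat \<Rightarrow> 'k::field" where
  "idm d = (\<lambda>r c. if r = c \<and> r < d then 1 else 0)"

definition mvec :: "nat \<Rightarrow> (nat \<Rightarrow> nat \<Rightarrow> 'k::field) \<Rightarrow> (nat \<Rightarrow> 'k) \<Rightarrow> nat \<Rightarrow> 'k" where
  "mvec d A v = (\<lambda>r. \<Sum>c<d. A r c * v c)"

definition bmat :: "nat \<Rightarrow> nat \<Rightarrow> (nat \<Rightarrow> nat \<Rightarrow> 'k::zero) \<Rightarrow> bool" where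
  "bmat r c A \<longleftrightarrow> (\<forall>x y. \<not> (x < r \<and> y < c) \<longrightarrow> A x y = 0)"

definition bvec :: "nat \<Rightarrow> (nat \<Rightarrow> 'k::zero) \<Rightarrow> bool" where
  "bvec d v \<longleftrightarrow> (\<forall>x. d \<le> x \<longrightarrow> v x = 0)"

text \<open>A representation: dimension vector and, for each arrow a : a -> a+1, a matrix
  of size dim(a+1) x dim(a).  Right A-modules = representations of (Q,I).\<close>

type_synonym 'k rep = "(nat \<Rightarrow> nat) \<times> (nat \<Rightarrow> nat \<Rightarrow> nat \<Rightarrow> 'k)"

definition dimv :: "'k rep \<Rightarrow> nat \<Rightarrow> nat" where "dimv M = fst M"
definition arr :: "'k rep \<Rightarrow> nat \<Rightarrow> nat \<Rightarrow> nat \<Rightarrow> 'k" where "arr M = snd M"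

fun pmap :: "'k::field rep \<Rightarrow> nat \<Rightarrow> nat \<Rightarrow> nat \<Rightarrow> nat \<Rightarrow> 'k" where
  "pmap M i 0 = (if i = 0 then idm (dimv M 0) else (\<lambda>_ _. 0))"
| "pmap M i (Suc j) = (if i = Suc j then idm (dimv M (Suc j))
      else if i \<le> j then mmul (dimv M j) (arr M j) (pmap M i j) else (\<lambda>_ _. 0))"

definition is_rep :: "nat \<Rightarrow> (nat \<times> nat) set \<Rightarrow> 'k::field rep \<Rightarrow> bool" where
  "is_rep n Z M \<longleftrightarrow> (\<forall>j. n \<le> j \<longrightarrow> dimv M j = 0) \<and>
     (\<forall>a. bmat (dimv M (Suc a)) (dimv M a) (arr M a)) \<and>
     (\<forall>i j. (i,j) \<in> Z \<longrightarrow> pmap M i j = (\<lambda>_ _. 0))"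

definition is_hom :: "nat \<Rightarrow> 'k::field rep \<Rightarrow> 'k rep \<Rightarrow> (nat \<Rightarrow> nat \<Rightarrow> nat \<Rightarrow> 'k) \<Rightarrow> bool" where
  "is_hom n M N g \<longleftrightarrow> (\<forall>j. bmat (dimv N j) (dimv M j) (g j)) \<and>
     (\<forall>a. Suc a < n \<longrightarrow>
        mmul (dimv M (Suc a)) (g (Suc a)) (arr M a) = mmul (dimv N a) (arr N a) (g a))"

definition is_mono :: "'k::field rep \<Rightarrow> (nat \<Rightarrow> nat \<Rightarrow> nat \<Rightarrow> 'k) \<Rightarrow> bool" where
  "is_mono M g \<longleftrightarrow> (\<forall>j v. bvec (dimv M j) v \<longrightarrow> mvec (dimv M j) (g j) v = (\<lambda>_. 0) \<longrightarrow> v = (\<lambda>_. 0))"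

definition is_epi :: "'k::field rep \<Rightarrow> 'k rep \<Rightarrow> (nat \<Rightarrow> nat \<Rightarrow> nat \<Rightarrow> 'k) \<Rightarrow> bool" where
  "is_epi M N g \<longleftrightarrow> (\<forall>j w. bvec (dimv N j) w \<longrightarrow> (\<exists>v. bvec (dimv M j) v \<and> mvec (dimv M j) (g j) v = w))"

definition is_exact_at :: "'k::field rep \<Rightarrow> 'k rep \<Rightarrow> (nat \<Rightarrow> nat \<Rightarrow> nat \<Rightarrow> 'k) \<Rightarrow> (nat \<Rightarrow> nat \<Rightarrow> nat \<Rightarrow> 'k) \<Rightarrow> bool" where
  "is_exact_at M N f g \<longleftrightarrow> (\<forall>j w. bvec (dimv N j) w \<longrightarrow>
      (mvec (dimv N j) (g j) w = (\<lambda>_. 0) \<longleftrightarrow> (\<exists>v. bvec (dimv M j) v \<and> mvec (dimv M j) (f j) v = w)))"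

definition is_injective :: "nat \<Rightarrow> (nat \<times> nat) set \<Rightarrow> 'k::field rep \<Rightarrow> bool" where
  "is_injective n Z I \<longleftrightarrow> is_rep n Z I \<and>
     (\<forall>(X::'k rep) (Y::'k rep) \<iota> h. is_rep n Z X \<longrightarrow> is_rep n Z Y \<longrightarrow> is_hom n X Y \<iota> \<longrightarrow> is_mono X \<iota> \<longrightarrow>
        is_hom n X I h \<longrightarrow>
        (\<exists>h'. is_hom n Y I h' \<and> (\<forall>j. mmul (dimv Y j) (h' j) (\<iota> j) = h j)))"

text \<open>id(M) <= 1: there is an injective coresolution 0 -> M -> I0 -> I1 -> 0.
  (For M = 0 this holds with I0 = I1 = 0.)\<close>
definition inj_dim_le1 :: "nat \<Rightarrow> (nat \<times> nat) set \<Rightarrow> 'k::field rep \<Rightarrow> bool" where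
  "inj_dim_le1 n Z M \<longleftrightarrow> (\<exists>(I0::'k rep) (I1::'k rep) \<mu> \<pi>.
     is_injective n Z I0 \<and> is_injective n Z I1 \<and> is_hom n M I0 \<mu> \<and> is_hom n I0 I1 \<pi> \<and>
     is_mono M \<mu> \<and> is_epi I0 I1 \<pi> \<and> is_exact_at M I0 \<mu> \<pi>)"

text \<open>Ext^1(M,N) as the group of extensions of M by N: an extension is given by the
  representation with spaces N_a (+) M_a and arrows [[N_a, phi_a],[0, M_a]]; it satisfies
  the relations iff the cocycle condition below holds; two such are equivalent extensions
  iff their difference is a coboundary.\<close>

definition ext_cocycles :: "nat \<Rightarrow> (nat \<times> nat) set \<Rightarrow> 'k::field rep \<Rightarrow> 'k rep \<Rightarrow> (nat \<Rightarrow> nat \<Rightarrow> nat \<Rightarrow> 'k) set" where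
  "ext_cocycles n Z M N = {\<phi>. (\<forall>a. bmat (dimv N (Suc a)) (dimv M a) (\<phi> a)) \<and>
      (\<forall>i j. (i,j) \<in> Z \<longrightarrow>
         (\<Sum>a\<in>{i..<j}. mmul (dimv N (Suc a)) (pmap N (Suc a) j) (mmul (dimv M a) (\<phi> a) (pmap M i a)))
           = (\<lambda>_ _. 0))}"

definition ext_coboundaries :: "nat \<Rightarrow> 'k::field rep \<Rightarrow> 'k rep \<Rightarrow> (nat \<Rightarrow> nat \<Rightarrow> nat \<Rightarrow> 'k) set" where
  "ext_coboundaries n M N = {\<phi>. \<exists>g. (\<forall>j. bmat (dimv N j) (dimv M j) (g j)) \<and>
      \<phi> = (\<lambda>a. mmul (dimv N a) (arr N a) (g a) - mmul (dimv M (Suc a)) (g (Suc a)) (arr M a))}"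

definition cscale :: "'k::field \<Rightarrow> (nat \<Rightarrow> nat \<Rightarrow> nat \<Rightarrow> 'k) \<Rightarrow> nat \<Rightarrow> nat \<Rightarrow> nat \<Rightarrow> 'k" where
  "cscale c f = (\<lambda>a r s. c * f a r s)"

definition dim_Ext1 :: "nat \<Rightarrow> (nat \<times> nat) set \<Rightarrow> 'k::field rep \<Rightarrow> 'k rep \<Rightarrow> nat" where
  "dim_Ext1 n Z M N = vector_space.dim cscale (ext_cocycles n Z M N)
                      - vector_space.dim cscale (ext_coboundaries n M N)"

text \<open>Modules spanned by a set B of nonzero paths (pairs (i,j): path from i to j) closed
  under right multiplication modulo I; the arrow a acts by right multiplication
  (path (i,a) |-> path (i,a+1), which is zero iff it is not in B).\<close>

definition pbasis :: "nat \<Rightarrow> (nat \<times> nat) set \<Rightarrow> nat \<Rightarrow> nat list" where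
  "pbasis n B j = filter (\<lambda>i. (i,j) \<in> B) (if j < n then [0..<n] else [])"

definition pathmod :: "nat \<Rightarrow> (nat \<times> nat) set \<Rightarrow> 'k::field rep" where
  "pathmod n B = (\<lambda>j. length (pbasis n B j),
     \<lambda>a r c. if r < length (pbasis n B (Suc a)) \<and> c < length (pbasis n B a) \<and>
                pbasis n B (Suc a) ! r = pbasis n B a ! c then 1 else 0)"

definition radJ :: "nat \<Rightarrow> (nat \<times> nat) set \<Rightarrow> 'k::field rep" where
  "radJ n Z = pathmod n {(i,j). i < j \<and> j < n \<and> (i,j) \<notin> Z}"

definition eJ :: "nat \<Rightarrow> (nat \<times> nat) set \<Rightarrow> nat \<Rightarrow> 'k::field rep" where
  "eJ n Z i = pathmod n {(i',j). i' = i \<and> i < j \<and> j < n \<and> (i,j) \<notin> Z}"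

end

theory Submission
  imports Defs
begin


locale nak =
  fixes n :: nat and Z :: "(nat \<times> nat) set"
  assumes n1: "1 \<le> n" and lni: "lin_nakayama_ideal n Z"
begin

definition r :: "nat \<Rightarrow> nat" where "r i = (LEAST j. j = n \<or> (i,j) \<in> Z)"

lemma Zsub: "(i,j) \<in> Z \<Longrightarrow> i + 2 \<le> j \<and> j < n"
  using lni unfolding lin_nakayama_ideal_def by auto

lemma Zup: "(i,j) \<in> Z \<Longrightarrow> i' \<le> i \<Longrightarrow> j \<le> j' \<Longrightarrow> j' < n \<Longrightarrow> (i',j') \<in> Z"
  using lni unfolding lin_nakayama_ideal_def by blast

lemma r_le_n: "r i \<le> n"
  unfolding r_def by (rule Least_le) simp

lemma r_prop: "r i = n \<or> (i, r i) \<in> Z"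
  unfolding r_def by (rule LeastI[of _ n]) simp

lemma Z_iff: "(i,j) \<in> Z \<longleftrightarrow> j < n \<and> r i \<le> j"
proof
  assume a: "(i,j) \<in> Z"
  then show "j < n \<and> r i \<le> j" using Zsub[OF a] unfolding r_def by (auto intro: Least_le)
next
  assume a: "j < n \<and> r i \<le> j"
  then have "(i, r i) \<in> Z" using r_prop[of i] by auto
  then show "(i,j) \<in> Z" using Zup[of i "r i" i j] a by auto
qed

lemma r_mono: "i \<le> i' \<Longrightarrow> r i \<le> r i'"
proof -
  assume a: "i \<le> i'"
  show ?thesis
  proof (cases "r i' = n")
    case True then show ?thesis using r_le_n by simp
  next
    case False
    then have "(i', r i') \<in> Z" using r_prop by auto
    then have "(i, r i') \<in> Z" using Zup[of i' "r i'" i "r i'"] a Zsub by auto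
    then show ?thesis using Z_iff by auto
  qed
qed

lemma r_gt: "i < n \<Longrightarrow> i < r i"
proof -
  assume "i < n"
  show ?thesis using r_prop[of i] Zsub[of i "r i"] \<open>i < n\<close> by auto
qed

lemma r_gt2: "i < n \<Longrightarrow> i + 2 \<le> r i \<or> r i = n"
  using r_prop[of i] Zsub[of i "r i"] by auto

lemma r_big: "n \<le> i + 1 \<Longrightarrow> r i = n"
  using r_prop[of i] Zsub[of i "r i"] by auto

definition Lf :: "nat \<Rightarrow> nat" where "Lf b = (LEAST a. b \<le> r a)"

lemma Lf_iff: "b \<le> n \<Longrightarrow> Lf b \<le> a \<longleftrightarrow> b \<le> r a"
proof
  assume b: "b \<le> n"
  have ex: "b \<le> r (n - 1)" using r_big[of "n-1"] b by simp
  have L: "b \<le> r (Lf b)" unfolding Lf_def by (rule LeastI[of _ "n-1"]) (rule ex)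
  { assume "Lf b \<le> a" then show "b \<le> r a" using r_mono[of "Lf b" a] L by simp }
next
  assume "b \<le> r a" then show "Lf b \<le> a" unfolding Lf_def by (rule Least_le)
qed

lemma Lf_mono: "b \<le> b' \<Longrightarrow> b' \<le> n \<Longrightarrow> Lf b \<le> Lf b'"
  using Lf_iff[of b' "Lf b'"] Lf_iff[of b "Lf b'"] by simp

lemma Lf_le: "1 \<le> b \<Longrightarrow> b \<le> n \<Longrightarrow> Lf b \<le> b - 1"
proof -
  assume a: "1 \<le> b" "b \<le> n"
  have "b - 1 < r (b - 1)" using r_gt[of "b-1"] a by simp
  then have "b \<le> r (b - 1)" using a by simp
  then show ?thesis using Lf_iff[of b "b-1"] a by simp
qed

definition low :: "nat \<Rightarrow> nat" where "low j = Lf (Suc j)"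

lemma inS: "j < n \<Longrightarrow> (s < j \<and> j < r s) \<longleftrightarrow> (low j \<le> s \<and> s < j)"
  unfolding low_def using Lf_iff[of "Suc j" s] by auto

lemma low_le: "j < n \<Longrightarrow> low j \<le> j"
  unfolding low_def using Lf_le[of "Suc j"] by simp

lemma low_mono: "j \<le> j' \<Longrightarrow> j' < n \<Longrightarrow> low j \<le> low j'"
  unfolding low_def by (rule Lf_mono) auto

end


lemma filter_upt_range: "filter (\<lambda>i. a \<le> i \<and> i < b) [0..<m] = [a..<min b m]"
proof (induction m)
  case 0 then show ?case by simp
next
  case (Suc m)
  show ?case
  proof (cases "a \<le> m \<and> m < b")
    case True
    then have "min b (Suc m) = Suc (min b m)" "min b m = m" by auto
    then show ?thesis using Suc True by simp
  next
    case False
    then show ?thesis using Suc by (auto simp: min_def)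
  qed
qed

lemma sum_single:
  fixes d c :: nat
  assumes "\<And>t. t < d \<Longrightarrow> t \<noteq> c \<Longrightarrow> f t = 0"
  shows "(\<Sum>t<d. f t) = (if c < d then f c else (0::'a::comm_monoid_add))"
proof (cases "c < d")
  case True
  have "(\<Sum>t<d. f t) = (\<Sum>t<d. if t = c then f c else 0)"
    by (rule sum.cong) (use assms in auto)
  also have "\<dots> = f c" using True by (subst sum.delta) auto
  finally show ?thesis using True by simp
next
  case False
  then show ?thesis using assms by (simp add: sum.neutral)
qed

context nak begin

definition D :: "nat \<Rightarrow> nat" where "D j = (if j < n then j - low j else 0)"

lemma pbasis_J: "pbasis n {(i,j). i < j \<and> j < n \<and> (i,j) \<notin> Z} j = (if j < n then [low j..<j] else [])"
proof (cases "j < n")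
  case True
  have "((i,j) \<in> {(i,j). i < j \<and> j < n \<and> (i,j) \<notin> Z}) = (low j \<le> i \<and> i < j)" for i
  proof -
    have "(i,j) \<notin> Z \<longleftrightarrow> j < r i" using Z_iff[of i j] True by auto
    then show ?thesis using inS[OF True, of i] True by auto
  qed
  then have "pbasis n {(i,j). i < j \<and> j < n \<and> (i,j) \<notin> Z} j = filter (\<lambda>i. low j \<le> i \<and> i < j) [0..<n]"
    unfolding pbasis_def using True by simp
  also have "\<dots> = [low j..<j]" using filter_upt_range True by (simp add: min_def)
  finally show ?thesis using True by simp
qed (simp add: pbasis_def)

lemma dimJ: "dimv (radJ n Z :: 'k::field rep) j = D j"
  unfolding radJ_def pathmod_def dimv_def D_def using pbasis_J by simp

lemma arrJ: "arr (radJ n Z :: 'k::field rep) a x y =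
   (if x < D (Suc a) \<and> y < D a \<and> low (Suc a) + x = low a + y then 1 else 0)"
proof -
  have "x < D (Suc a) \<Longrightarrow> y < D a \<Longrightarrow>
     (pbasis n {(i,j). i < j \<and> j < n \<and> (i,j) \<notin> Z} (Suc a) ! x =
      pbasis n {(i,j). i < j \<and> j < n \<and> (i,j) \<notin> Z} a ! y) = (low (Suc a) + x = low a + y)"
    unfolding pbasis_J D_def by (auto simp del: upt_Suc simp add: nth_upt split: if_splits)
  then show ?thesis
    unfolding radJ_def pathmod_def arr_def using pbasis_J[of a] pbasis_J[of "Suc a"]
    by (auto simp: D_def split: if_splits)
qed

lemma D_pos: "x < D j \<Longrightarrow> j < n \<and> low j + x < j"
  unfolding D_def by (auto split: if_splits)

lemma pmapJ: "pmap (radJ n Z :: 'k::field rep) i j x y =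
   (if i \<le> j \<and> x < D j \<and> y < D i \<and> low j + x = low i + y then 1 else 0)"
proof (induction j arbitrary: x y)
  case 0
  then show ?case by (auto simp: idm_def dimJ D_def)
next
  case (Suc j)
  show ?case
  proof (cases "i = Suc j")
    case True then show ?thesis by (auto simp: idm_def dimJ)
  next
    case False
    show ?thesis
    proof (cases "i \<le> j")
      case True
      have "pmap (radJ n Z :: 'k rep) i (Suc j) x y =
            (\<Sum>t<D j. arr (radJ n Z :: 'k rep) j x t * pmap (radJ n Z :: 'k rep) i j t y)"
        using False True by (simp add: mmul_def dimJ)
      also have "\<dots> = (if low (Suc j) + x - low j < D j then
            arr (radJ n Z :: 'k rep) j x (low (Suc j) + x - low j) * pmap (radJ n Z :: 'k rep) i j (low (Suc j) + x - low j) y else 0)"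
        by (rule sum_single) (auto simp: arrJ)
      also have "\<dots> = (if i \<le> Suc j \<and> x < D (Suc j) \<and> y < D i \<and> low (Suc j) + x = low i + y then 1 else 0)"
      proof -
        { assume h: "x < D (Suc j)" "y < D i" "low (Suc j) + x = low i + y"
          have jn: "Suc j < n" using h D_pos by auto
          have lm: "low j \<le> low (Suc j)" using low_mono[of j "Suc j"] jn by simp
          have "low i + y < i" using h D_pos by auto
          then have "low (Suc j) + x - low j < D j" using h jn lm True by (simp add: D_def)
          then have "(if low (Suc j) + x - low j < D j then
            arr (radJ n Z :: 'k rep) j x (low (Suc j) + x - low j) * pmap (radJ n Z :: 'k rep) i j (low (Suc j) + x - low j) y else 0) = 1"
            using h lm True by (simp add: arrJ Suc.IH)
        }
        moreover
        { assume h: "\<not> (x < D (Suc j) \<and> y < D i \<and> low (Suc j) + x = low i + y)"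
          have "(if low (Suc j) + x - low j < D j then
            arr (radJ n Z :: 'k rep) j x (low (Suc j) + x - low j) * pmap (radJ n Z :: 'k rep) i j (low (Suc j) + x - low j) y else 0) = 0"
            using h by (auto simp: arrJ Suc.IH)
        }
        ultimately show ?thesis using True by auto
      qed
      finally show ?thesis .
    next
      case False2: False
      then show ?thesis using False by simp
    qed
  qed
qed

end


lemma sum_app: "(\<Sum>a\<in>A. F a) x = (\<Sum>a\<in>A. F a x)"
  by (induction A rule: infinite_finite_induct) auto

context nak begin

definition vS :: "nat \<Rightarrow> nat \<Rightarrow> bool" where "vS j s \<longleftrightarrow> s < j \<and> j < r s"

lemma vS_iff: "vS j s \<longleftrightarrow> j < n \<and> low j \<le> s \<and> s < j"
proof
  assume a: "vS j s"
  then have "j < n" using r_le_n[of s] unfolding vS_def by linarith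
  then show "j < n \<and> low j \<le> s \<and> s < j" using a inS[of j s] unfolding vS_def by auto
next
  assume "j < n \<and> low j \<le> s \<and> s < j"
  then show "vS j s" using inS[of j s] unfolding vS_def by auto
qed

lemma vS_D: "vS j s \<Longrightarrow> s - low j < D j \<and> low j + (s - low j) = s"
  unfolding vS_iff D_def by auto

lemma D_vS: "x < D j \<Longrightarrow> vS j (low j + x)"
  unfolding vS_iff D_def by (auto split: if_splits)

definition X :: "(nat \<Rightarrow> nat \<Rightarrow> nat \<Rightarrow> 'k::field) \<Rightarrow> nat \<Rightarrow> nat \<Rightarrow> nat \<Rightarrow> 'k" where
  "X \<phi> a p q = (if vS (Suc a) p \<and> vS a q then \<phi> a (p - low (Suc a)) (q - low a) else 0)"

lemma inner_entry:
  assumes "i \<le> a"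
  shows "mmul (D a) (\<phi> a) (pmap (radJ n Z :: 'k::field rep) i a) s y =
    (if y < D i \<and> vS a (low i + y) then \<phi> a s (low i + y - low a) else 0)"
proof -
  have "mmul (D a) (\<phi> a) (pmap (radJ n Z :: 'k::field rep) i a) s y =
     (\<Sum>t<D a. \<phi> a s t * (if i \<le> a \<and> t < D a \<and> y < D i \<and> low a + t = low i + y then 1 else 0))"
    unfolding mmul_def pmapJ by simp
  also have "\<dots> = (if low i + y - low a < D a then \<phi> a s (low i + y - low a) *
      (if i \<le> a \<and> low i + y - low a < D a \<and> y < D i \<and> low a + (low i + y - low a) = low i + y then 1 else 0) else 0)"
    by (rule sum_single) auto
  also have "\<dots> = (if y < D i \<and> vS a (low i + y) then \<phi> a s (low i + y - low a) else 0)"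
    using assms unfolding vS_iff D_def by auto
  finally show ?thesis .
qed

lemma outer_entry:
  assumes "a < j"
  shows "mmul (D (Suc a)) (pmap (radJ n Z :: 'k::field rep) (Suc a) j) F x y =
    (if x < D j \<and> vS (Suc a) (low j + x) then F (low j + x - low (Suc a)) y else 0)"
proof -
  have "mmul (D (Suc a)) (pmap (radJ n Z :: 'k::field rep) (Suc a) j) F x y =
     (\<Sum>s<D (Suc a). (if Suc a \<le> j \<and> x < D j \<and> s < D (Suc a) \<and> low j + x = low (Suc a) + s then 1 else 0) * F s y)"
    unfolding mmul_def pmapJ by simp
  also have "\<dots> = (if low j + x - low (Suc a) < D (Suc a) then
      (if Suc a \<le> j \<and> x < D j \<and> low j + x - low (Suc a) < D (Suc a) \<and> low j + x = low (Suc a) + (low j + x - low (Suc a)) then 1 else 0) * F (low j + x - low (Suc a)) y else 0)"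
    by (rule sum_single) auto
  also have "\<dots> = (if x < D j \<and> vS (Suc a) (low j + x) then F (low j + x - low (Suc a)) y else 0)"
    using assms unfolding vS_iff D_def by auto
  finally show ?thesis .
qed

lemma full_entry:
  assumes "i \<le> a" "a < j"
  shows "mmul (D (Suc a)) (pmap (radJ n Z :: 'k::field rep) (Suc a) j) (mmul (D a) (\<phi> a) (pmap (radJ n Z :: 'k::field rep) i a)) x y =
    (if x < D j \<and> y < D i then X \<phi> a (low j + x) (low i + y) else 0)"
  unfolding outer_entry[OF assms(2)] inner_entry[OF assms(1)] X_def by auto

lemma cocyc_sum_entry:
  "(\<Sum>a\<in>{i..<j}. mmul (D (Suc a)) (pmap (radJ n Z :: 'k::field rep) (Suc a) j) (mmul (D a) (\<phi> a) (pmap (radJ n Z :: 'k::field rep) i a))) x y =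
    (if x < D j \<and> y < D i then (\<Sum>a\<in>{i..<j}. X \<phi> a (low j + x) (low i + y)) else 0)"
  by (cases "x < D j \<and> y < D i") (auto simp: sum_app full_entry intro!: sum.neutral)

lemma cocyc_iff:
  "\<phi> \<in> ext_cocycles n Z (radJ n Z :: 'k::field rep) (radJ n Z) \<longleftrightarrow>
    (\<forall>a. bmat (D (Suc a)) (D a) (\<phi> a)) \<and>
    (\<forall>i j p q. (i,j) \<in> Z \<longrightarrow> vS j p \<longrightarrow> vS i q \<longrightarrow> (\<Sum>a\<in>{i..<j}. X \<phi> a p q) = 0)"
proof -
  have key: "((\<Sum>a\<in>{i..<j}. mmul (D (Suc a)) (pmap (radJ n Z :: 'k::field rep) (Suc a) j) (mmul (D a) (\<phi> a) (pmap (radJ n Z :: 'k::field rep) i a))) = (\<lambda>_ _. 0))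
     \<longleftrightarrow> (\<forall>p q. vS j p \<longrightarrow> vS i q \<longrightarrow> (\<Sum>a\<in>{i..<j}. X \<phi> a p q) = 0)" for i j
  proof
    assume h: "(\<Sum>a\<in>{i..<j}. mmul (D (Suc a)) (pmap (radJ n Z :: 'k::field rep) (Suc a) j) (mmul (D a) (\<phi> a) (pmap (radJ n Z :: 'k::field rep) i a))) = (\<lambda>_ _. 0)"
    show "\<forall>p q. vS j p \<longrightarrow> vS i q \<longrightarrow> (\<Sum>a\<in>{i..<j}. X \<phi> a p q) = 0"
    proof (intro allI impI)
      fix p q assume p: "vS j p" and q: "vS i q"
      have "(\<Sum>a\<in>{i..<j}. mmul (D (Suc a)) (pmap (radJ n Z :: 'k::field rep) (Suc a) j) (mmul (D a) (\<phi> a) (pmap (radJ n Z :: 'k::field rep) i a))) (p - low j) (q - low i) = 0"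
        using h by simp
      then show "(\<Sum>a\<in>{i..<j}. X \<phi> a p q) = 0"
        unfolding cocyc_sum_entry using vS_D[OF p] vS_D[OF q] by simp
    qed
  next
    assume h: "\<forall>p q. vS j p \<longrightarrow> vS i q \<longrightarrow> (\<Sum>a\<in>{i..<j}. X \<phi> a p q) = 0"
    show "(\<Sum>a\<in>{i..<j}. mmul (D (Suc a)) (pmap (radJ n Z :: 'k::field rep) (Suc a) j) (mmul (D a) (\<phi> a) (pmap (radJ n Z :: 'k::field rep) i a))) = (\<lambda>_ _. 0)"
    proof (intro ext)
      fix x y
      show "(\<Sum>a\<in>{i..<j}. mmul (D (Suc a)) (pmap (radJ n Z :: 'k::field rep) (Suc a) j) (mmul (D a) (\<phi> a) (pmap (radJ n Z :: 'k::field rep) i a))) x y = 0"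
        unfolding cocyc_sum_entry using h D_vS[of x j] D_vS[of y i] by simp
    qed
  qed
  show ?thesis unfolding ext_cocycles_def dimJ using key by auto
qed

definition delta :: "(nat \<Rightarrow> nat \<Rightarrow> nat \<Rightarrow> 'k::field) \<Rightarrow> nat \<Rightarrow> nat \<Rightarrow> nat \<Rightarrow> 'k" where
  "delta g = (\<lambda>a. mmul (D a) (arr (radJ n Z) a) (g a) - mmul (D (Suc a)) (g (Suc a)) (arr (radJ n Z) a))"

lemma cobound_iff:
  "\<phi> \<in> ext_coboundaries n (radJ n Z :: 'k::field rep) (radJ n Z) \<longleftrightarrow>
    (\<exists>g. (\<forall>j. bmat (D j) (D j) (g j)) \<and> \<phi> = delta g)"
  unfolding ext_coboundaries_def dimJ delta_def by simp

definition Gd :: "(nat \<Rightarrow> nat \<Rightarrow> nat \<Rightarrow> 'k::field) \<Rightarrow> nat \<Rightarrow> nat \<Rightarrow> nat \<Rightarrow> 'k" where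
  "Gd g j p q = (if vS j p \<and> vS j q then g j (p - low j) (q - low j) else 0)"

lemma X_delta:
  "X (delta (g :: nat \<Rightarrow> nat \<Rightarrow> nat \<Rightarrow> 'k::field)) a p q = (if vS (Suc a) p \<and> vS a q then Gd g a p q - Gd g (Suc a) p q else 0)"
proof (cases "vS (Suc a) p \<and> vS a q")
  case True
  have p1: "vS (Suc a) p" and q0: "vS a q" using True by auto
  have A: "mmul (D a) (arr (radJ n Z :: 'k rep) a) (g a) (p - low (Suc a)) (q - low a) = Gd g a p q"
  proof -
    have "mmul (D a) (arr (radJ n Z :: 'k rep) a) (g a) (p - low (Suc a)) (q - low a) =
      (\<Sum>t<D a. (if p - low (Suc a) < D (Suc a) \<and> t < D a \<and> low (Suc a) + (p - low (Suc a)) = low a + t then 1 else 0) * g a t (q - low a))"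
      unfolding mmul_def arrJ by simp
    also have "\<dots> = (if p - low a < D a then (if p - low (Suc a) < D (Suc a) \<and> p - low a < D a \<and> low (Suc a) + (p - low (Suc a)) = low a + (p - low a) then 1 else 0) * g a (p - low a) (q - low a) else 0)"
      by (rule sum_single) (use vS_D[OF p1] in auto)
    also have "\<dots> = Gd g a p q"
      using p1 q0 unfolding Gd_def vS_iff D_def by auto
    finally show ?thesis .
  qed
  have B: "mmul (D (Suc a)) (g (Suc a)) (arr (radJ n Z :: 'k rep) a) (p - low (Suc a)) (q - low a) = Gd g (Suc a) p q"
  proof -
    have "mmul (D (Suc a)) (g (Suc a)) (arr (radJ n Z :: 'k rep) a) (p - low (Suc a)) (q - low a) =
      (\<Sum>t<D (Suc a). g (Suc a) (p - low (Suc a)) t * (if t < D (Suc a) \<and> q - low a < D a \<and> low (Suc a) + t = low a + (q - low a) then 1 else 0))"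
      unfolding mmul_def arrJ by simp
    also have "\<dots> = (if q - low (Suc a) < D (Suc a) then g (Suc a) (p - low (Suc a)) (q - low (Suc a)) * (if q - low (Suc a) < D (Suc a) \<and> q - low a < D a \<and> low (Suc a) + (q - low (Suc a)) = low a + (q - low a) then 1 else 0) else 0)"
      by (rule sum_single) (use vS_D[OF q0] in auto)
    also have "\<dots> = Gd g (Suc a) p q"
      using p1 q0 unfolding Gd_def vS_iff D_def by auto
    finally show ?thesis .
  qed
  show ?thesis using A B True unfolding X_def delta_def by simp
next
  case False
  then show ?thesis unfolding X_def by auto
qed

lemma bmat_mmul:
  assumes "bmat r1 c1 A" "bmat c1 c2 B"
  shows "bmat r1 c2 (mmul c1 A B)"
  using assms unfolding bmat_def mmul_def by auto

lemma bmat_diff: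
  fixes A B :: "nat \<Rightarrow> nat \<Rightarrow> 'k::field"
  assumes "bmat r1 c1 A" "bmat r1 c1 B"
  shows "bmat r1 c1 (A - B)"
  using assms unfolding bmat_def by auto

lemma bmat_arrJ: "bmat (D (Suc a)) (D a) (arr (radJ n Z :: 'k::field rep) a)"
  unfolding bmat_def arrJ by auto

lemma delta_bmat:
  fixes g :: "nat \<Rightarrow> nat \<Rightarrow> nat \<Rightarrow> 'k::field"
  assumes "\<forall>j. bmat (D j) (D j) (g j)"
  shows "bmat (D (Suc a)) (D a) (delta g a)"
  unfolding delta_def using assms bmat_arrJ
  by (intro bmat_diff bmat_mmul) auto

lemma telescope: "i \<le> j \<Longrightarrow> (\<Sum>a\<in>{i..<j}. (G a - G (Suc a)) :: 'a::ab_group_add) = G i - G j"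
proof (induction j)
  case 0 then show ?case by simp
next
  case (Suc j)
  show ?case
  proof (cases "i = Suc j")
    case True then show ?thesis by simp
  next
    case False
    then have "i \<le> j" using Suc by simp
    then show ?thesis using Suc by simp
  qed
qed

lemma cobound_cocyc:
  assumes "\<phi> \<in> ext_coboundaries n (radJ n Z :: 'k::field rep) (radJ n Z)"
  shows "\<phi> \<in> ext_cocycles n Z (radJ n Z :: 'k::field rep) (radJ n Z)"
proof -
  obtain g where g: "\<forall>j. bmat (D j) (D j) (g j)" and phi: "\<phi> = delta g"
    using assms cobound_iff by blast
  have "(\<Sum>a\<in>{i..<j}. X \<phi> a p q) = 0" if ij: "(i,j) \<in> Z" and p: "vS j p" and q: "vS i q" for i j p q
  proof -
    have ij2: "i \<le> j" using Zsub[OF ij] by simp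
    have "X \<phi> a p q = Gd g a p q - Gd g (Suc a) p q" if a: "a \<in> {i..<j}" for a
    proof (cases "vS (Suc a) p \<and> vS a q")
      case True then show ?thesis unfolding phi X_delta by simp
    next
      case False
      have "Gd g a p q = 0 \<and> Gd g (Suc a) p q = 0"
      proof (cases "vS (Suc a) p")
        case True
        then have "\<not> vS a q" using False by simp
        then have "r q \<le> a" using q a unfolding vS_def by auto
        then show ?thesis unfolding Gd_def vS_def by auto
      next
        case False
        then have "Suc a \<le> p" using p a unfolding vS_def by auto
        then show ?thesis unfolding Gd_def vS_def by auto
      qed
      then show ?thesis unfolding phi X_delta by simp
    qed
    then have "(\<Sum>a\<in>{i..<j}. X \<phi> a p q) = (\<Sum>a\<in>{i..<j}. Gd g a p q - Gd g (Suc a) p q)"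
      by (rule sum.cong[OF refl])
    also have "\<dots> = Gd g i p q - Gd g j p q" by (rule telescope[OF ij2])
    also have "Gd g i p q = 0"
    proof -
      have "\<not> vS i p"
      proof
        assume "vS i p"
        then have "p \<le> i" unfolding vS_def by simp
        then have "(p, j) \<in> Z" using Zup[OF ij, of p j] Zsub[OF ij] by simp
        then show False using p Z_iff unfolding vS_def by auto
      qed
      then show ?thesis unfolding Gd_def by simp
    qed
    also have "Gd g j p q = 0"
    proof -
      have "\<not> vS j q"
      proof
        assume "vS j q"
        have "q \<le> i" using q unfolding vS_def by simp
        then have "(q, j) \<in> Z" using Zup[OF ij, of q j] Zsub[OF ij] by simp
        then show False using \<open>vS j q\<close> Z_iff unfolding vS_def by auto
      qed
      then show ?thesis unfolding Gd_def by simp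
    qed
    finally show ?thesis by simp
  qed
  then show ?thesis unfolding cocyc_iff using delta_bmat[OF g] phi by auto
qed

definition special :: "nat \<Rightarrow> nat \<Rightarrow> bool" where
  "special p q \<longleftrightarrow> q < p \<and> p < r q \<and> r q < r p \<and> r p \<le> r (Suc q)"

definition Epq :: "nat \<Rightarrow> nat \<Rightarrow> nat \<Rightarrow> nat \<Rightarrow> nat \<Rightarrow> 'k::field" where
  "Epq p q = (\<lambda>a x y. if a = p \<and> x = p - low (Suc p) \<and> y = q - low p then 1 else 0)"

lemma special_vS: "special p q \<Longrightarrow> vS (Suc p) p \<and> vS p q"
  unfolding special_def vS_def by auto

lemma X_Epq:
  assumes "special p q"
  shows "X (Epq p q :: nat \<Rightarrow> nat \<Rightarrow> nat \<Rightarrow> 'k::field) a p' q' = (if a = p \<and> p' = p \<and> q' = q then 1 else 0)"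
proof -
  have v: "vS (Suc p) p" "vS p q" using special_vS[OF assms] by auto
  show ?thesis
  proof (cases "a = p \<and> vS (Suc a) p' \<and> vS a q'")
    case True
    then have "(p' - low (Suc p) = p - low (Suc p)) = (p' = p)" "(q' - low p = q - low p) = (q' = q)"
      using v unfolding vS_iff by auto
    then show ?thesis using True v unfolding X_def Epq_def by auto
  next
    case False
    then show ?thesis using v unfolding X_def Epq_def by auto
  qed
qed

lemma Epq_bmat:
  assumes "special p q"
  shows "bmat (D (Suc a)) (D a) ((Epq p q :: nat \<Rightarrow> nat \<Rightarrow> nat \<Rightarrow> 'k::field) a)"
  using vS_D[of "Suc p" p] vS_D[of p q] special_vS[OF assms] unfolding bmat_def Epq_def by auto

lemma Epq_cocyc:
  assumes sp: "special p q"
  shows "(Epq p q :: nat \<Rightarrow> nat \<Rightarrow> nat \<Rightarrow> 'k::field) \<in> ext_cocycles n Z (radJ n Z :: 'k::field rep) (radJ n Z)"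
proof -
  have "(\<Sum>a\<in>{i..<j}. X (Epq p q :: nat \<Rightarrow> nat \<Rightarrow> nat \<Rightarrow> 'k::field) a p' q') = 0"
    if ij: "(i,j) \<in> Z" and p': "vS j p'" and q': "vS i q'" for i j p' q'
  proof -
    have "\<not> (i \<le> p \<and> p < j \<and> p' = p \<and> q' = q)"
    proof
      assume h: "i \<le> p \<and> p < j \<and> p' = p \<and> q' = q"
      have "r i \<le> j" using ij Z_iff by auto
      have "j < r p" using p' h unfolding vS_def by auto
      have "Suc q \<le> i" using q' h unfolding vS_def by auto
      then have "r (Suc q) \<le> r i" by (rule r_mono)
      then show False using sp \<open>r i \<le> j\<close> \<open>j < r p\<close> unfolding special_def by auto
    qed
    then show ?thesis unfolding X_Epq[OF sp] by (auto intro: sum.neutral)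
  qed
  then show ?thesis unfolding cocyc_iff using Epq_bmat[OF sp] by auto
qed

end


lemma cscale_app: "cscale c f a x y = c * f a x y" by (simp add: cscale_def)

lemma sum3_app: "(\<Sum>i\<in>A. F i) a x y = (\<Sum>i\<in>A. F i a x y)" by (simp add: sum_app)

context nak begin

lemma X_diff: "X (f - g) a p q = X f a p q - (X g a p q :: 'k::field)"
  unfolding X_def by simp

lemma X_scale: "X (cscale c f) a p q = c * (X f a p q :: 'k::field)"
  unfolding X_def cscale_def by simp

lemma X_sum: "X (\<Sum>i\<in>A. F i) a p q = (\<Sum>i\<in>A. X (F i) a p q :: 'k::field)"
proof (cases "vS (Suc a) p \<and> vS a q")
  case True then show ?thesis unfolding X_def by (simp add: sum3_app)
next
  case False
  then have c: "(vS (Suc a) p \<and> vS a q) = False" by simp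
  show ?thesis unfolding X_def c by simp
qed

lemma special_lt: "special p q \<Longrightarrow> p < n \<and> q < p"
  unfolding special_def using r_le_n[of q] by auto

definition Spec :: "(nat \<times> nat) set" where "Spec = {(p,q). special p q}"

lemma Spec_fin: "finite Spec"
proof -
  have "Spec \<subseteq> {..<n} \<times> {..<n}" unfolding Spec_def using special_lt by fastforce
  then show ?thesis by (rule finite_subset) auto
qed

definition cc :: "(nat \<Rightarrow> nat \<Rightarrow> nat \<Rightarrow> 'k::field) \<Rightarrow> nat \<Rightarrow> nat \<Rightarrow> 'k" where
  "cc \<phi> p q = (\<Sum>a<n. X \<phi> a p q)"

definition Ecomb :: "(nat \<Rightarrow> nat \<Rightarrow> nat \<Rightarrow> 'k::field) \<Rightarrow> nat \<Rightarrow> nat \<Rightarrow> nat \<Rightarrow> 'k" where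
  "Ecomb \<phi> = (\<Sum>pq\<in>Spec. cscale (cc \<phi> (fst pq) (snd pq)) (Epq (fst pq) (snd pq)))"

lemma X_Ecomb: "X (Ecomb \<phi>) a p q = (if special p q \<and> a = p then cc \<phi> p q else 0)"
proof -
  have "X (Ecomb \<phi>) a p q = (\<Sum>pq\<in>Spec. cc \<phi> (fst pq) (snd pq) * X (Epq (fst pq) (snd pq)) a p q)"
    unfolding Ecomb_def X_sum X_scale by simp
  also have "\<dots> = (\<Sum>pq\<in>Spec. if pq = (p,q) then (if a = p then cc \<phi> p q else 0) else 0)"
    by (rule sum.cong[OF refl]) (auto simp: Spec_def X_Epq split: if_splits)
  also have "\<dots> = (if special p q \<and> a = p then cc \<phi> p q else 0)"
    by (subst sum.delta[OF Spec_fin]) (auto simp: Spec_def)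
  finally show ?thesis .
qed

lemma Ecomb_bmat: "bmat (D (Suc a)) (D a) (Ecomb \<phi> a)"
  unfolding bmat_def
proof (intro allI impI)
  fix x y assume h: "\<not> (x < D (Suc a) \<and> y < D a)"
  have "Ecomb \<phi> a x y = (\<Sum>pq\<in>Spec. cc \<phi> (fst pq) (snd pq) * Epq (fst pq) (snd pq) a x y)"
    unfolding Ecomb_def sum3_app cscale_app by simp
  also have "\<dots> = 0"
  proof (intro sum.neutral ballI)
    fix pq assume "pq \<in> Spec"
    then have "special (fst pq) (snd pq)" unfolding Spec_def by auto
    then have "Epq (fst pq) (snd pq) a x y = (0::'a)"
      using Epq_bmat[of "fst pq" "snd pq" a] h unfolding bmat_def by blast
    then show "cc \<phi> (fst pq) (snd pq) * Epq (fst pq) (snd pq) a x y = 0" by simp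
  qed
  finally show "Ecomb \<phi> a x y = 0" .
qed

lemma eq_by_X:
  fixes F H :: "nat \<Rightarrow> nat \<Rightarrow> nat \<Rightarrow> 'k::field"
  assumes "\<forall>a. bmat (D (Suc a)) (D a) (F a)" "\<forall>a. bmat (D (Suc a)) (D a) (H a)"
    and "\<And>a p q. vS (Suc a) p \<Longrightarrow> vS a q \<Longrightarrow> X F a p q = X H a p q"
  shows "F = H"
proof (intro ext)
  fix a x y
  show "F a x y = H a x y"
  proof (cases "x < D (Suc a) \<and> y < D a")
    case True
    have v: "vS (Suc a) (low (Suc a) + x)" "vS a (low a + y)" using D_vS True by auto
    show ?thesis using assms(3)[OF v] v unfolding X_def by simp
  next
    case False
    then show ?thesis using assms(1,2) unfolding bmat_def by auto
  qed
qed

lemma decomp: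
  fixes \<phi> :: "nat \<Rightarrow> nat \<Rightarrow> nat \<Rightarrow> 'k::field"
  assumes phi: "\<phi> \<in> ext_cocycles n Z (radJ n Z :: 'k rep) (radJ n Z)"
  shows "\<exists>g. (\<forall>j. bmat (D j) (D j) (g j)) \<and> \<phi> - Ecomb \<phi> = delta g"
proof -
  define xx where "xx a p q = X (\<phi> - Ecomb \<phi>) a p q" for a p q
  have xx_eq: "xx a p q = X \<phi> a p q - (if special p q \<and> a = p then cc \<phi> p q else 0)" for a p q
    unfolding xx_def X_diff X_Ecomb by simp
  have supp: "vS (Suc a) p \<and> vS a q" if "xx a p q \<noteq> 0" for a p q
  proof (rule ccontr)
    assume h: "\<not> (vS (Suc a) p \<and> vS a q)"
    then have "X \<phi> a p q = 0" unfolding X_def by auto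
    moreover have "(if special p q \<and> a = p then cc \<phi> p q else 0) = 0" using h special_vS by auto
    ultimately show False using that xx_eq by simp
  qed
  have supp2: "p \<le> b \<and> Suc b < r p \<and> q < b \<and> b < r q" if "xx b p q \<noteq> 0" for b p q
    using supp[OF that] unfolding vS_def by auto
  have coc: "\<And>i j p q. (i,j) \<in> Z \<Longrightarrow> vS j p \<Longrightarrow> vS i q \<Longrightarrow> (\<Sum>a\<in>{i..<j}. X \<phi> a p q) = 0"
    using phi unfolding cocyc_iff by blast
  have T0: "(\<Sum>b<n. xx b p q) = 0" if qp: "q < p" and rr: "r q < r p" for p q
  proof (cases "special p q")
    case True
    have "(\<Sum>b<n. xx b p q) = (\<Sum>b<n. X \<phi> b p q) - (\<Sum>b<n. if b = p then cc \<phi> p q else 0)"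
      unfolding xx_eq using True by (simp add: sum_subtractf)
    also have "\<dots> = 0" using special_lt[OF True] by (simp add: cc_def)
    finally show ?thesis .
  next
    case False
    show ?thesis
    proof (cases "r q \<le> p")
      case True
      have "xx b p q = 0" for b
      proof (rule ccontr)
        assume "xx b p q \<noteq> 0"
        then show False using supp2[of b p q] True by linarith
      qed
      then show ?thesis by simp
    next
      case pl: False
      then have rp: "r (Suc q) < r p" using False qp rr unfolding special_def by auto
      define j0 where "j0 = max (r (Suc q)) (r q)"
      have j0n: "j0 < n" using rp rr r_le_n[of p] unfolding j0_def by auto
      have ij: "(Suc q, j0) \<in> Z" unfolding Z_iff j0_def using j0n j0_def by auto
      have vp: "vS j0 p" unfolding vS_def j0_def using pl rp rr by auto
      have vq: "vS (Suc q) q" unfolding vS_def using pl qp by auto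
      have c0: "(\<Sum>a\<in>{Suc q..<j0}. X \<phi> a p q) = 0" by (rule coc[OF ij vp vq])
      have xxe: "xx b p q = X \<phi> b p q" for b using False xx_eq by simp
      have "(\<Sum>b<n. xx b p q) = (\<Sum>b\<in>{Suc q..<j0}. xx b p q)"
      proof (rule sum.mono_neutral_right)
        show "{Suc q..<j0} \<subseteq> {..<n}" using j0n by auto
        show "\<forall>b\<in>{..<n} - {Suc q..<j0}. xx b p q = 0"
        proof
          fix b assume "b \<in> {..<n} - {Suc q..<j0}"
          then have "b < Suc q \<or> j0 \<le> b" by auto
          then show "xx b p q = 0" using supp2[of b p q] unfolding j0_def by fastforce
        qed
      qed auto
      also have "\<dots> = 0" using c0 xxe by simp
      finally show ?thesis .
    qed
  qed
  define Gfun where "Gfun p q j = (if p \<le> q then (\<Sum>b\<in>{j..<n}. xx b p q) else - (\<Sum>b<j. xx b p q))" for p q j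
  define g where "g j x y = (if x < D j \<and> y < D j then Gfun (low j + x) (low j + y) j else 0)" for j x y
  have gb: "\<forall>j. bmat (D j) (D j) (g j)" unfolding g_def bmat_def by auto
  have Gd_g: "Gd g j p q = (if vS j p \<and> vS j q then Gfun p q j else 0)" for j p q
    unfolding Gd_def g_def using vS_D[of j p] vS_D[of j q] by auto
  have "\<phi> - Ecomb \<phi> = delta g"
  proof (rule eq_by_X)
    show "\<forall>a. bmat (D (Suc a)) (D a) ((\<phi> - Ecomb \<phi>) a)"
      using phi Ecomb_bmat unfolding cocyc_iff by (auto intro: bmat_diff)
    show "\<forall>a. bmat (D (Suc a)) (D a) (delta g a)" using delta_bmat[OF gb] by auto
    fix a p q assume vp: "vS (Suc a) p" and vq: "vS a q"
    have f1: "p < Suc a" "Suc a < r p" "q < a" "a < r q" using vp vq unfolding vS_def by auto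
    have an: "a < n" using f1 r_le_n[of q] by simp
    have Ga: "Gd g a p q = (if p < a then Gfun p q a else 0)"
      unfolding Gd_g using f1 vq unfolding vS_def by auto
    have Gs: "Gd g (Suc a) p q = (if Suc a < r q then Gfun p q (Suc a) else 0)"
      unfolding Gd_g using f1 vp unfolding vS_def by auto
    have goal: "Gd g a p q - Gd g (Suc a) p q = xx a p q"
    proof (cases "p \<le> q")
      case True
      then have pa: "p < a" using f1 by simp
      have s1: "(\<Sum>b\<in>{a..<n}. xx b p q) = xx a p q + (\<Sum>b\<in>{Suc a..<n}. xx b p q)"
        using an by (simp add: sum.atLeast_Suc_lessThan)
      show ?thesis
      proof (cases "Suc a < r q")
        case True
        then show ?thesis unfolding Ga Gs Gfun_def using pa \<open>p \<le> q\<close> s1 by simp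
      next
        case False
        have "(\<Sum>b\<in>{Suc a..<n}. xx b p q) = 0"
          by (rule sum.neutral) (use supp2 False in fastforce)
        then show ?thesis unfolding Ga Gs Gfun_def using pa \<open>p \<le> q\<close> s1 False by simp
      qed
    next
      case False
      then have qp: "q < p" by simp
      have s2: "(\<Sum>b<Suc a. xx b p q) = (\<Sum>b<a. xx b p q) + xx a p q" by simp
      show ?thesis
      proof (cases "Suc a < r q")
        case True
        show ?thesis
        proof (cases "p < a")
          case True
          then show ?thesis unfolding Ga Gs Gfun_def using \<open>Suc a < r q\<close> False s2 by simp
        next
          case pa: False
          have "(\<Sum>b<a. xx b p q) = 0"
            by (rule sum.neutral) (use supp2 pa f1 in fastforce)
          then show ?thesis unfolding Ga Gs Gfun_def using True False pa s2 by simp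
        qed
      next
        case ra: False
        then have rq: "r q = Suc a" using f1 by simp
        then have rqp: "r q < r p" using f1 by simp
        have t: "(\<Sum>b<n. xx b p q) = 0" by (rule T0[OF qp rqp])
        have "(\<Sum>b<n. xx b p q) = (\<Sum>b<Suc a. xx b p q)"
        proof (rule sum.mono_neutral_right)
          show "{..<Suc a} \<subseteq> {..<n}" using an by auto
          show "\<forall>b\<in>{..<n} - {..<Suc a}. xx b p q = 0"
            using supp2 rq by fastforce
        qed auto
        then have t2: "(\<Sum>b<a. xx b p q) + xx a p q = 0" using t s2 by simp
        show ?thesis
        proof (cases "p < a")
          case True
          then show ?thesis unfolding Ga Gs Gfun_def using ra False t2
            by (simp add: minus_equation_iff add_eq_0_iff)
        next
          case pa: False
          have "(\<Sum>b<a. xx b p q) = 0"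
            by (rule sum.neutral) (use supp2 pa f1 in fastforce)
          then show ?thesis unfolding Ga Gs Gfun_def using ra False pa t2 by simp
        qed
      qed
    qed
    show "X (\<phi> - Ecomb \<phi>) a p q = X (delta g) a p q"
      unfolding X_delta using vp vq goal xx_def by simp
  qed
  then show ?thesis using gb by blast
qed

end


lemma vs_cscale: "vector_space (cscale :: 'k::field \<Rightarrow> (nat \<Rightarrow> nat \<Rightarrow> nat \<Rightarrow> 'k) \<Rightarrow> _)"
  unfolding vector_space_def cscale_def by (auto simp: fun_eq_iff algebra_simps)

context nak begin

definition unit3 :: "nat \<times> nat \<times> nat \<Rightarrow> nat \<Rightarrow> nat \<Rightarrow> nat \<Rightarrow> 'k::field" where
  "unit3 i = (\<lambda>j x y. if (j,x,y) = i then 1 else 0)"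

definition Idx :: "(nat \<times> nat \<times> nat) set" where
  "Idx = {(j,x,y). j < n \<and> x < D j \<and> y < D j}"

lemma Idx_fin: "finite Idx"
proof -
  have "Idx \<subseteq> {..<n} \<times> {..<n} \<times> {..<n}" unfolding Idx_def D_def by (auto split: if_splits)
  then show ?thesis by (rule finite_subset) auto
qed

lemma delta_lin:
  fixes c :: "'i \<Rightarrow> 'k::field"
  shows "delta (\<Sum>i\<in>A. cscale (c i) (u i)) = (\<Sum>i\<in>A. cscale (c i) (delta (u i)))"
proof (intro ext)
  fix a x y
  have L: "(\<Sum>t<D a. arr (radJ n Z :: 'k rep) a x t * (\<Sum>i\<in>A. c i * u i a t y)) = (\<Sum>i\<in>A. c i * (\<Sum>t<D a. arr (radJ n Z :: 'k rep) a x t * u i a t y))"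
    by (simp add: sum_distrib_left sum.swap[of _ A] algebra_simps)
  have R: "(\<Sum>t<D (Suc a). (\<Sum>i\<in>A. c i * u i (Suc a) x t) * arr (radJ n Z :: 'k rep) a t y) = (\<Sum>i\<in>A. c i * (\<Sum>t<D (Suc a). u i (Suc a) x t * arr (radJ n Z :: 'k rep) a t y))"
    by (simp add: sum_distrib_left sum_distrib_right sum.swap[of _ A] algebra_simps)
  show "delta (\<Sum>i\<in>A. cscale (c i) (u i)) a x y = (\<Sum>i\<in>A. cscale (c i) (delta (u i))) a x y"
    unfolding delta_def mmul_def sum3_app cscale_app using L R
    by (simp add: sum_subtractf right_diff_distrib)
qed

lemma g_expand:
  fixes g :: "nat \<Rightarrow> nat \<Rightarrow> nat \<Rightarrow> 'k::field"
  assumes "\<forall>j. bmat (D j) (D j) (g j)"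
  shows "g = (\<Sum>i\<in>Idx. cscale (g (fst i) (fst (snd i)) (snd (snd i))) (unit3 i))"
proof (intro ext)
  fix j x y
  have "(\<Sum>i\<in>Idx. cscale (g (fst i) (fst (snd i)) (snd (snd i))) (unit3 i)) j x y
      = (\<Sum>i\<in>Idx. if i = (j,x,y) then g j x y else 0)"
    unfolding sum3_app cscale_app unit3_def by (rule sum.cong) auto
  also have "\<dots> = (if (j,x,y) \<in> Idx then g j x y else 0)"
    by (subst sum.delta[OF Idx_fin]) simp
  also have "\<dots> = g j x y"
    using assms unfolding Idx_def bmat_def D_def by auto
  finally show "g j x y = (\<Sum>i\<in>Idx. cscale (g (fst i) (fst (snd i)) (snd (snd i))) (unit3 i)) j x y" by simp
qed

lemma cc_sum:
  "cc (\<Sum>v\<in>t. cscale (u v) (f v)) p q = (\<Sum>v\<in>t. u v * cc (f v) p q :: 'k::field)"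
  unfolding cc_def X_sum X_scale by (simp add: sum_distrib_left sum.swap[of _ t])

lemma cc_Epq:
  assumes "special p q" "special p' q'"
  shows "cc (Epq p' q' :: nat \<Rightarrow> nat \<Rightarrow> nat \<Rightarrow> 'k::field) p q = (if p = p' \<and> q = q' then 1 else 0)"
proof -
  have "cc (Epq p' q' :: nat \<Rightarrow> nat \<Rightarrow> nat \<Rightarrow> 'k::field) p q = (\<Sum>a<n. if a = p' then (if p = p' \<and> q = q' then 1 else 0) else 0)"
    unfolding cc_def X_Epq[OF assms(2)] by (rule sum.cong) auto
  also have "\<dots> = (if p = p' \<and> q = q' then 1 else 0)"
    using special_lt[OF assms(2)] by (subst sum.delta) auto
  finally show ?thesis .
qed

lemma cc_delta:
  fixes g :: "nat \<Rightarrow> nat \<Rightarrow> nat \<Rightarrow> 'k::field"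
  assumes sp: "special p q"
  shows "cc (delta g) p q = 0"
proof -
  have sp2: "q < p" "p < r q" "r q < r p" using sp unfolding special_def by auto
  have rqn: "r q \<le> n" by (rule r_le_n)
  have valid: "(vS (Suc a) p \<and> vS a q) = (p \<le> a \<and> a < r q)" for a
  proof
    assume "vS (Suc a) p \<and> vS a q" then show "p \<le> a \<and> a < r q" unfolding vS_def by linarith
  next
    assume h: "p \<le> a \<and> a < r q" then show "vS (Suc a) p \<and> vS a q" unfolding vS_def using sp2 by linarith
  qed
  have "cc (delta g) p q = (\<Sum>a\<in>{p..<r q}. X (delta g) a p q)"
    unfolding cc_def
  proof (rule sum.mono_neutral_right)
    show "\<forall>a\<in>{..<n} - {p..<r q}. X (delta g) a p q = 0"
    proof
      fix a assume "a \<in> {..<n} - {p..<r q}"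
      then have "\<not> (p \<le> a \<and> a < r q)" by auto
      then have c: "(vS (Suc a) p \<and> vS a q) = False" using valid by blast
      show "X (delta g) a p q = 0" unfolding X_delta c by simp
    qed
  qed (use rqn in auto)
  also have "\<dots> = (\<Sum>a\<in>{p..<r q}. Gd g a p q - Gd g (Suc a) p q)"
  proof (rule sum.cong[OF refl])
    fix a assume "a \<in> {p..<r q}"
    then have c: "(vS (Suc a) p \<and> vS a q) = True" using valid by simp
    show "X (delta g) a p q = Gd g a p q - Gd g (Suc a) p q" unfolding X_delta c by simp
  qed
  also have "\<dots> = Gd g p p q - Gd g (r q) p q"
    by (rule telescope) (use sp2 in simp)
  also have "\<dots> = 0" unfolding Gd_def vS_def by simp
  finally show ?thesis .
qed

lemma dimExt: "dim_Ext1 n Z (radJ n Z :: 'k::field rep) (radJ n Z) = card Spec"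
proof -
  interpret V: vector_space "cscale :: 'k \<Rightarrow> (nat \<Rightarrow> nat \<Rightarrow> nat \<Rightarrow> 'k) \<Rightarrow> _" by (rule vs_cscale)
  define Zc where "Zc = ext_cocycles n Z (radJ n Z :: 'k rep) (radJ n Z)"
  define Bc where "Bc = ext_coboundaries n (radJ n Z :: 'k rep) (radJ n Z)"
  define W where "W = (\<lambda>i. delta (unit3 i :: nat \<Rightarrow> nat \<Rightarrow> nat \<Rightarrow> 'k)) ` Idx"
  have finW: "finite W" unfolding W_def using Idx_fin by simp
  have BW: "Bc \<subseteq> V.span W"
  proof
    fix \<phi> assume "\<phi> \<in> Bc"
    then obtain g where g: "\<forall>j. bmat (D j) (D j) (g j)" and phi: "\<phi> = delta g"
      unfolding Bc_def cobound_iff by blast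
    have "\<phi> = (\<Sum>i\<in>Idx. cscale (g (fst i) (fst (snd i)) (snd (snd i))) (delta (unit3 i)))"
      unfolding phi by (subst g_expand[OF g]) (rule delta_lin)
    also have "\<dots> \<in> V.span W"
      unfolding W_def by (intro V.span_sum V.span_scale V.span_base) auto
    finally show "\<phi> \<in> V.span W" .
  qed
  obtain b where b: "b \<subseteq> Bc" "V.independent b" "Bc \<subseteq> V.span b" "card b = V.dim Bc"
    using V.basis_exists by blast
  have finb: "finite b"
    using V.independent_span_bound[OF finW b(2)] b(1) BW by auto
  define E where "E = (\<lambda>pq. Epq (fst pq) (snd pq) :: nat \<Rightarrow> nat \<Rightarrow> nat \<Rightarrow> 'k) ` Spec"
  have ccB: "cc v p q = 0" if vB: "v \<in> Bc" and vsp: "special p q" for v p q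
  proof -
    obtain g :: "nat \<Rightarrow> nat \<Rightarrow> nat \<Rightarrow> 'k" where "v = delta g" using vB unfolding Bc_def cobound_iff by blast
    then show ?thesis using cc_delta[OF vsp] by simp
  qed
  have injE: "inj_on (\<lambda>pq. Epq (fst pq) (snd pq) :: nat \<Rightarrow> nat \<Rightarrow> nat \<Rightarrow> 'k) Spec"
  proof (rule inj_onI)
    fix x y assume x: "x \<in> Spec" and y: "y \<in> Spec"
      and e: "(Epq (fst x) (snd x) :: nat \<Rightarrow> nat \<Rightarrow> nat \<Rightarrow> 'k) = Epq (fst y) (snd y)"
    have sx: "special (fst x) (snd x)" and sy: "special (fst y) (snd y)" using x y unfolding Spec_def by auto
    have "cc (Epq (fst x) (snd x) :: nat \<Rightarrow> nat \<Rightarrow> nat \<Rightarrow> 'k) (fst x) (snd x) = 1"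
      using cc_Epq[OF sx sx] by simp
    then have "cc (Epq (fst y) (snd y) :: nat \<Rightarrow> nat \<Rightarrow> nat \<Rightarrow> 'k) (fst x) (snd x) = 1" using e by simp
    then have c1: "cc (Epq (fst y) (snd y) :: nat \<Rightarrow> nat \<Rightarrow> nat \<Rightarrow> 'k) (fst x) (snd x) = 1" .
    show "x = y"
    proof (rule ccontr)
      assume "x \<noteq> y"
      then have nc: "\<not> (fst x = fst y \<and> snd x = snd y)" by (auto simp: prod_eq_iff)
      have "cc (Epq (fst y) (snd y) :: nat \<Rightarrow> nat \<Rightarrow> nat \<Rightarrow> 'k) (fst x) (snd x) = (if fst x = fst y \<and> snd x = snd y then 1 else 0)"
        by (rule cc_Epq[OF sx sy])
      also have "\<dots> = 0" using nc by (rule if_not_P)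
      finally have "cc (Epq (fst y) (snd y) :: nat \<Rightarrow> nat \<Rightarrow> nat \<Rightarrow> 'k) (fst x) (snd x) = 0" .
      then show False using c1 by simp
    qed
  qed
  have cardE: "card E = card Spec" unfolding E_def using card_image[OF injE] .
  have finE: "finite E" unfolding E_def using Spec_fin by simp
  have disj: "b \<inter> E = {}"
  proof (rule ccontr)
    assume "b \<inter> E \<noteq> {}"
    then obtain pq where pq: "pq \<in> Spec" "Epq (fst pq) (snd pq) \<in> b" unfolding E_def by auto
    have sp: "special (fst pq) (snd pq)" using pq(1) unfolding Spec_def by auto
    have "cc (Epq (fst pq) (snd pq) :: nat \<Rightarrow> nat \<Rightarrow> nat \<Rightarrow> 'k) (fst pq) (snd pq) = 0"
      using ccB[of "Epq (fst pq) (snd pq)"] pq(2) b(1) sp by auto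
    moreover have "cc (Epq (fst pq) (snd pq) :: nat \<Rightarrow> nat \<Rightarrow> nat \<Rightarrow> 'k) (fst pq) (snd pq) = 1"
      using cc_Epq[OF sp sp] by simp
    ultimately show False by simp
  qed
  have indep: "V.independent (b \<union> E)"
    unfolding V.independent_explicit_module
  proof (intro allI impI)
    fix t u v
    assume t: "finite t" "t \<subseteq> b \<union> E" and s: "(\<Sum>v\<in>t. cscale (u v) v) = 0" and v: "v \<in> t"
    have uE: "u e = 0" if e: "e \<in> t \<inter> E" for e
    proof -
      obtain p q where pq: "(p,q) \<in> Spec" "e = Epq p q" using e unfolding E_def by auto
      have sp: "special p q" using pq unfolding Spec_def by auto
      have "0 = cc (0 :: nat \<Rightarrow> nat \<Rightarrow> nat \<Rightarrow> 'k) p q" unfolding cc_def X_def zero_fun_def by simp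
      also have "\<dots> = cc (\<Sum>v\<in>t. cscale (u v) v) p q" using s by simp
      also have "\<dots> = (\<Sum>v\<in>t. u v * cc v p q)" by (rule cc_sum)
      also have "\<dots> = (\<Sum>v\<in>t. if v = e then u v else 0)"
      proof (rule sum.cong[OF refl])
        fix w assume w: "w \<in> t"
        show "u w * cc w p q = (if w = e then u w else 0)"
        proof (cases "w \<in> b")
          case True
          then have "w \<noteq> e" using disj e by auto
          then show ?thesis using ccB[of w p q] True b(1) sp by auto
        next
          case False
          then obtain pq' where pq': "pq' \<in> Spec" "w = Epq (fst pq') (snd pq')" using w t unfolding E_def by auto
          have sp': "special (fst pq') (snd pq')" using pq' unfolding Spec_def by auto
          have we: "(w = e) = (pq' = (p,q))"
          proof
            assume "w = e"
            then have "(\<lambda>pq. Epq (fst pq) (snd pq) :: nat \<Rightarrow> nat \<Rightarrow> nat \<Rightarrow> 'k) pq' = (\<lambda>pq. Epq (fst pq) (snd pq)) (p,q)"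
              using pq' pq by simp
            then show "pq' = (p,q)" using inj_onD[OF injE _ pq'(1) pq(1)] by blast
          next
            assume "pq' = (p,q)" then show "w = e" using pq' pq by simp
          qed
          have cw: "cc w p q = (if p = fst pq' \<and> q = snd pq' then 1 else 0)"
            unfolding pq'(2) by (rule cc_Epq[OF sp sp'])
          show ?thesis
          proof (cases "pq' = (p,q)")
            case True
            then show ?thesis using we cw by simp
          next
            case False
            then have "\<not> (p = fst pq' \<and> q = snd pq')" by auto
            then have "cc w p q = 0" unfolding cw by (rule if_not_P)
            then show ?thesis using we False by simp
          qed
        qed
      qed
      also have "\<dots> = u e" using t e by (subst sum.delta) auto
      finally show ?thesis by simp
    qed
    have "(\<Sum>v\<in>t \<inter> b. cscale (u v) v) = (\<Sum>v\<in>t. cscale (u v) v)"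
    proof (rule sum.mono_neutral_left)
      show "\<forall>i\<in>t - t \<inter> b. cscale (u i) i = 0"
        using uE t unfolding cscale_def by (auto simp: fun_eq_iff)
    qed (use t in auto)
    then have s2: "(\<Sum>v\<in>t \<inter> b. cscale (u v) v) = 0" using s by simp
    show "u v = 0"
    proof (cases "v \<in> b")
      case True
      then show ?thesis using V.independentD[OF b(2) _ _ s2] t v by auto
    next
      case False
      then show ?thesis using uE v t by auto
    qed
  qed
  have sub: "b \<union> E \<subseteq> Zc"
  proof
    fix v assume "v \<in> b \<union> E"
    then show "v \<in> Zc"
    proof
      assume "v \<in> b" then have "v \<in> Bc" using b(1) by auto
      then show "v \<in> Zc" unfolding Zc_def Bc_def by (rule cobound_cocyc)
    next
      assume "v \<in> E"
      then obtain pq where "pq \<in> Spec" "v = Epq (fst pq) (snd pq)" unfolding E_def by auto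
      then show "v \<in> Zc" unfolding Zc_def using Epq_cocyc unfolding Spec_def by auto
    qed
  qed
  have span: "Zc \<subseteq> V.span (b \<union> E)"
  proof
    fix \<phi> assume phi: "\<phi> \<in> Zc"
    obtain g where g: "\<forall>j. bmat (D j) (D j) (g j)" and e: "\<phi> - Ecomb \<phi> = delta g"
      using decomp phi unfolding Zc_def by blast
    have "delta g \<in> Bc" unfolding Bc_def cobound_iff using g by blast
    then have d: "delta g \<in> V.span (b \<union> E)" using b(3) V.span_mono[of b "b \<union> E"] by auto
    have "Ecomb \<phi> \<in> V.span (b \<union> E)"
      unfolding Ecomb_def E_def by (intro V.span_sum V.span_scale V.span_base) auto
    then have "delta g + Ecomb \<phi> \<in> V.span (b \<union> E)" using d V.span_add by blast
    moreover have "\<phi> = delta g + Ecomb \<phi>" using e by (simp add: algebra_simps)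
    ultimately show "\<phi> \<in> V.span (b \<union> E)" by simp
  qed
  have dZ: "card (b \<union> E) = V.dim Zc" by (rule V.basis_card_eq_dim[OF sub span indep])
  have cu: "card (b \<union> E) = card b + card E" using finb finE disj by (rule card_Un_disjoint)
  have e1: "dim_Ext1 n Z (radJ n Z :: 'k rep) (radJ n Z) = V.dim Zc - V.dim Bc"
    unfolding dim_Ext1_def Zc_def Bc_def by (rule refl)
  have "V.dim Zc = V.dim Bc + card Spec" using dZ cu b(4) cardE by linarith
  then show ?thesis using e1 by linarith
qed

end


lemma mmul_assoc: "mmul d2 A (mmul d1 B C) = mmul d1 (mmul d2 A B) (C :: nat \<Rightarrow> nat \<Rightarrow> 'k::field)"
  unfolding mmul_def
  by (auto simp: fun_eq_iff sum_distrib_left sum_distrib_right mult.assoc intro: sum.swap)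

lemma mmul_idm_left: "bmat d c B \<Longrightarrow> mmul d (idm d) B = (B :: nat \<Rightarrow> nat \<Rightarrow> 'k::field)"
proof (intro ext)
  fix x y assume b: "bmat d c B"
  have "mmul d (idm d) B x y = (\<Sum>t<d. if t = x then (if x < d then B x y else 0) else 0)"
    unfolding mmul_def idm_def by (rule sum.cong) auto
  also have "\<dots> = B x y" using b unfolding bmat_def by (subst sum.delta) auto
  finally show "mmul d (idm d) B x y = B x y" .
qed

lemma mmul_idm_right: "bmat r d A \<Longrightarrow> mmul d A (idm d) = (A :: nat \<Rightarrow> nat \<Rightarrow> 'k::field)"
proof (intro ext)
  fix x y assume b: "bmat r d A"
  have "mmul d A (idm d) x y = (\<Sum>t<d. if t = y then (if y < d then A x y else 0) else 0)"
    unfolding mmul_def idm_def by (rule sum.cong) auto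
  also have "\<dots> = A x y" using b unfolding bmat_def by (subst sum.delta) auto
  finally show "mmul d A (idm d) x y = A x y" .
qed

lemma mvec_mmul: "mvec d (mmul d' A B) v = mvec d' A (mvec d B (v :: nat \<Rightarrow> 'k::field))"
  unfolding mvec_def mmul_def
  by (auto simp: fun_eq_iff sum_distrib_left sum_distrib_right mult.assoc intro: sum.swap)

definition arrs_ok :: "'k::field rep \<Rightarrow> bool" where
  "arrs_ok M \<longleftrightarrow> (\<forall>a. bmat (dimv M (Suc a)) (dimv M a) (arr M a))"

lemma rep_arrs_ok: "is_rep n Z M \<Longrightarrow> arrs_ok M"
  unfolding is_rep_def arrs_ok_def by auto

lemma bmat_mmul2:
  assumes "bmat r1 c1 A" "bmat c1 c2 B"
  shows "bmat r1 c2 (mmul c1 A (B :: nat \<Rightarrow> nat \<Rightarrow> 'k::field))"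
  using assms unfolding bmat_def mmul_def by auto

lemma bmat_idm: "bmat d d (idm d)" unfolding bmat_def idm_def by auto

lemma bmat_zero: "bmat r c (\<lambda>_ _. 0)" unfolding bmat_def by auto

lemma pmap_bmat: "arrs_ok M \<Longrightarrow> bmat (dimv M j) (dimv M i) (pmap M i j)"
proof (induction j)
  case 0 then show ?case by (auto simp: bmat_idm bmat_zero)
next
  case (Suc j)
  then show ?case using bmat_mmul2[of "dimv M (Suc j)" "dimv M j" "arr M j" "dimv M i" "pmap M i j"]
    unfolding arrs_ok_def by (auto simp: bmat_idm bmat_zero)
qed

lemma pmap_step: "i \<le> j \<Longrightarrow> pmap M i (Suc j) = mmul (dimv M j) (arr M j) (pmap M i j)"
  by simp

lemma pmap_refl: "pmap M i i = idm (dimv M i)"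
  by (cases i) auto

lemma pmap_split:
  assumes ok: "arrs_ok M" and im: "i \<le> m"
  shows "m \<le> k \<Longrightarrow> pmap M i k = mmul (dimv M m) (pmap M m k) (pmap M i m)"
proof (induction k)
  case 0
  then have "m = 0" "i = 0" using im by auto
  then show ?case using mmul_idm_left[OF pmap_bmat[OF ok, of 0 0]] by (simp add: pmap_refl)
next
  case (Suc k)
  show ?case
  proof (cases "m = Suc k")
    case True
    then show ?thesis using mmul_idm_left[OF pmap_bmat[OF ok, of "Suc k" i]] by (simp only: pmap_refl)
  next
    case False
    then have mk: "m \<le> k" using Suc by simp
    have "pmap M i (Suc k) = mmul (dimv M k) (arr M k) (pmap M i k)"
      using mk im by (intro pmap_step) simp
    also have "\<dots> = mmul (dimv M k) (arr M k) (mmul (dimv M m) (pmap M m k) (pmap M i m))"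
      using Suc mk by simp
    also have "\<dots> = mmul (dimv M m) (mmul (dimv M k) (arr M k) (pmap M m k)) (pmap M i m)"
      by (rule mmul_assoc)
    also have "mmul (dimv M k) (arr M k) (pmap M m k) = pmap M m (Suc k)"
      using mk by (simp add: pmap_step)
    finally show ?thesis .
  qed
qed

lemma pmap_one: "arrs_ok M \<Longrightarrow> pmap M i (Suc i) = arr M i"
  using mmul_idm_right[of "dimv M (Suc i)" "dimv M i" "arr M i"] unfolding arrs_ok_def
  by (simp add: pmap_refl)

lemma pmap_left:
  assumes ok: "arrs_ok M" and ik: "i < k"
  shows "pmap M i k = mmul (dimv M (Suc i)) (pmap M (Suc i) k) (arr M i)"
  using pmap_split[OF ok, of i "Suc i" k] ik pmap_one[OF ok] by simp

lemma hom_pmap: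
  assumes h: "is_hom n M N g" and okM: "arrs_ok M" and okN: "arrs_ok N" and ij: "i \<le> j"
  shows "j < n \<Longrightarrow> mmul (dimv M j) (g j) (pmap M i j) = mmul (dimv N i) (pmap N i j) (g i)"
  using ij
proof (induction j)
  case 0
  then have "i = 0" by simp
  have b0: "bmat (dimv N 0) (dimv M 0) (g 0)" using h unfolding is_hom_def by simp
  show ?case using mmul_idm_left[OF b0] mmul_idm_right[OF b0] \<open>i = 0\<close> by simp
next
  case (Suc j)
  show ?case
  proof (cases "i = Suc j")
    case True
    have b0: "bmat (dimv N i) (dimv M i) (g i)" using h unfolding is_hom_def by simp
    show ?thesis using mmul_idm_left[OF b0] mmul_idm_right[OF b0] True by (simp only: pmap_refl)
  next
    case False
    then have ij': "i \<le> j" using Suc by simp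
    have hc: "mmul (dimv M (Suc j)) (g (Suc j)) (arr M j) = mmul (dimv N j) (arr N j) (g j)"
      using h Suc unfolding is_hom_def by simp
    have "mmul (dimv M (Suc j)) (g (Suc j)) (pmap M i (Suc j)) =
          mmul (dimv M (Suc j)) (g (Suc j)) (mmul (dimv M j) (arr M j) (pmap M i j))"
      using ij' by simp
    also have "\<dots> = mmul (dimv M j) (mmul (dimv M (Suc j)) (g (Suc j)) (arr M j)) (pmap M i j)"
      by (rule mmul_assoc)
    also have "\<dots> = mmul (dimv M j) (mmul (dimv N j) (arr N j) (g j)) (pmap M i j)"
      using hc by simp
    also have "\<dots> = mmul (dimv N j) (arr N j) (mmul (dimv M j) (g j) (pmap M i j))"
      by (rule mmul_assoc[symmetric])
    also have "\<dots> = mmul (dimv N j) (arr N j) (mmul (dimv N i) (pmap N i j) (g i))"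
      using Suc ij' by simp
    also have "\<dots> = mmul (dimv N i) (mmul (dimv N j) (arr N j) (pmap N i j)) (g i)"
      by (rule mmul_assoc)
    also have "\<dots> = mmul (dimv N i) (pmap N i (Suc j)) (g i)"
      using ij' by simp
    finally show ?thesis .
  qed
qed

definition vscale :: "'k::field \<Rightarrow> (nat \<Rightarrow> 'k) \<Rightarrow> nat \<Rightarrow> 'k" where
  "vscale c v = (\<lambda>x. c * v x)"

lemma vs_vscale: "vector_space (vscale :: 'k::field \<Rightarrow> _)"
  unfolding vector_space_def vscale_def by (auto simp: fun_eq_iff algebra_simps)

lemma row_extend:
  fixes A :: "nat \<Rightarrow> nat \<Rightarrow> 'k::field" and h :: "nat \<Rightarrow> 'k"
  assumes bA: "bmat dY dX A"
    and inj: "\<And>v. bvec dX v \<Longrightarrow> mvec dX A v = (\<lambda>_. 0) \<Longrightarrow> v = (\<lambda>_. 0)"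
  shows "\<exists>f. \<forall>y<dX. (\<Sum>s<dY. f s * A s y) = h y"
proof -
  interpret P: vector_space_pair "vscale :: 'k \<Rightarrow> _" "vscale :: 'k \<Rightarrow> _"
    by (intro vector_space_pair.intro vs_vscale)

  define T where "T = mvec dX A"
  have lin: "Vector_Spaces.linear vscale vscale T"
  proof (rule Vector_Spaces.linear_iff[THEN iffD2], intro conjI allI vs_vscale)
    show "T (x + y) = T x + T y" for x y
      unfolding T_def mvec_def by (auto simp: fun_eq_iff sum.distrib algebra_simps)
    show "T (vscale c x) = vscale c (T x)" for c x
      unfolding T_def mvec_def vscale_def by (auto simp: fun_eq_iff sum_distrib_left algebra_simps)
  qed
  define S where "S = {v :: nat \<Rightarrow> 'k. bvec dX v}"
  have sub: "P.vs1.subspace S"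
    unfolding P.vs1.subspace_def S_def bvec_def vscale_def by auto
  have injS: "inj_on T S"
  proof (rule inj_onI)
    fix v w assume v: "v \<in> S" and w: "w \<in> S" and e: "T v = T w"
    have "T (v - w) = T v - T w" unfolding T_def mvec_def by (auto simp: fun_eq_iff sum_subtractf algebra_simps)
    then have "mvec dX A (v - w) = (\<lambda>_. 0)" using e unfolding T_def by (simp add: fun_eq_iff)
    moreover have "bvec dX (v - w)" using v w unfolding S_def bvec_def by auto
    ultimately have "v - w = (\<lambda>_. 0)" using inj by blast
    then show "v = w" by (simp add: fun_eq_iff)
  qed
  obtain g where glin: "Vector_Spaces.linear vscale vscale g" and gT: "\<forall>v\<in>S. g (T v) = v"
    using P.linear_exists_left_inverse_on[OF lin sub injS] by blast
  define e where "e s = (\<lambda>x::nat. if x = s then (1::'k) else 0)" for s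
  define f where "f s = (\<Sum>t<dX. h t * g (e s) t)" for s
  have "(\<Sum>s<dY. f s * A s y) = h y" if y: "y < dX" for y
  proof -
    have Te: "(\<Sum>s<dY. vscale (A s y) (e s)) = T (e y)"
    proof (intro ext)
      fix x
      have "(\<Sum>s<dY. vscale (A s y) (e s)) x = (\<Sum>s<dY. if s = x then A x y else 0)"
        unfolding vscale_def e_def sum_app by (rule sum.cong) auto
      also have "\<dots> = A x y" using bA y unfolding bmat_def by (subst sum.delta) auto
      also have "\<dots> = T (e y) x"
        unfolding T_def mvec_def e_def using y by (simp add: sum.delta if_distrib cong: if_cong)
      finally show "(\<Sum>s<dY. vscale (A s y) (e s)) x = T (e y) x" .
    qed
    have eS: "e y \<in> S" unfolding S_def bvec_def e_def using y by auto
    have "(\<Sum>s<dY. f s * A s y) = (\<Sum>t<dX. h t * (\<Sum>s<dY. A s y * g (e s) t))"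
      unfolding f_def by (simp add: sum_distrib_left sum_distrib_right sum.swap[of _ "{..<dY}"] algebra_simps)
    also have "(\<lambda>t. \<Sum>s<dY. A s y * g (e s) t) = g (\<Sum>s<dY. vscale (A s y) (e s))"
    proof -
      have "g (\<Sum>s<dY. vscale (A s y) (e s)) = (\<Sum>s<dY. g (vscale (A s y) (e s)))"
        by (rule P.linear_sum[OF glin])
      also have "\<dots> = (\<Sum>s<dY. vscale (A s y) (g (e s)))"
        using P.linear_scale[OF glin] by simp
      finally show ?thesis by (simp add: fun_eq_iff sum_app vscale_def)
    qed
    also have "\<dots> = e y" using Te gT eS by simp
    finally show ?thesis unfolding e_def using y by (simp add: if_distrib sum.delta cong: if_cong)
  qed
  then show ?thesis by blast
qed


definition ivl :: "nat \<Rightarrow> nat \<Rightarrow> 'k::field rep" where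
  "ivl a b = (\<lambda>j. if a \<le> j \<and> j < b then 1 else 0,
              \<lambda>k x y. if a \<le> k \<and> Suc k < b \<and> x = 0 \<and> y = 0 then 1 else 0)"

lemma dim_ivl: "dimv (ivl a b :: 'k::field rep) j = (if a \<le> j \<and> j < b then 1 else 0)"
  unfolding ivl_def dimv_def by simp

lemma arr_ivl: "arr (ivl a b :: 'k::field rep) k x y = (if a \<le> k \<and> Suc k < b \<and> x = 0 \<and> y = 0 then 1 else 0)"
  unfolding ivl_def arr_def by simp

lemma ok_ivl: "arrs_ok (ivl a b :: 'k::field rep)"
  unfolding arrs_ok_def bmat_def dim_ivl arr_ivl by auto

lemma sum_01:
  fixes f :: "nat \<Rightarrow> 'a::comm_monoid_add"
  shows "(\<Sum>t<(if c then 1 else 0). f t) = (if c then f 0 else 0)"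
  by (cases c) simp_all

lemma pmap_ivl: "pmap (ivl a b :: 'k::field rep) i j x y = (if i \<le> j \<and> a \<le> i \<and> j < b \<and> x = 0 \<and> y = 0 then 1 else 0)"
proof (induction j arbitrary: x y)
  case 0
  then show ?case by (auto simp: idm_def dim_ivl)
next
  case (Suc j)
  show ?case
  proof (cases "i = Suc j")
    case True then show ?thesis by (auto simp: idm_def dim_ivl)
  next
    case False
    show ?thesis
    proof (cases "i \<le> j")
      case True
      have "pmap (ivl a b :: 'k rep) i (Suc j) x y = (\<Sum>t<dimv (ivl a b :: 'k rep) j. arr (ivl a b :: 'k rep) j x t * pmap (ivl a b :: 'k rep) i j t y)"
        using True False by (simp add: mmul_def)
      also have "\<dots> = (if i \<le> Suc j \<and> a \<le> i \<and> Suc j < b \<and> x = 0 \<and> y = 0 then 1 else 0)"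
        unfolding dim_ivl sum_01 arr_ivl Suc.IH using True by auto
      finally show ?thesis .
    next
      case False2: False
      then show ?thesis using False by simp
    qed
  qed
qed

lemma mmul_zero_l: "mmul d (\<lambda>_ _. 0) B = (\<lambda>_ _. (0::'k::field))"
  unfolding mmul_def by simp

lemma mmul_zero_r: "mmul d A (\<lambda>_ _. 0) = (\<lambda>_ _. (0::'k::field))"
  unfolding mmul_def by simp

lemma bmat0: "bmat 0 c A \<Longrightarrow> A = (\<lambda>_ _. 0)"
  unfolding bmat_def by auto

lemma pmap_ivl_idm: "l \<le> j \<Longrightarrow> j \<le> k \<Longrightarrow> k < b \<Longrightarrow> pmap (ivl l b :: 'k::field rep) j k = idm 1"
  by (auto simp: fun_eq_iff pmap_ivl idm_def)

lemma arr_ivl_idm: "l \<le> a \<Longrightarrow> Suc a < b \<Longrightarrow> arr (ivl l b :: 'k::field rep) a = idm 1"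
  by (auto simp: fun_eq_iff arr_ivl idm_def)

lemma arr_ivl_zero: "\<not> (l \<le> a \<and> Suc a < b) \<Longrightarrow> arr (ivl l b :: 'k::field rep) a = (\<lambda>_ _. 0)"
  by (auto simp: fun_eq_iff arr_ivl)

context nak begin

lemma rep_ivl:
  assumes "b \<le> n" "a < b \<Longrightarrow> b \<le> r a"
  shows "is_rep n Z (ivl a b :: 'k::field rep)"
  unfolding is_rep_def
proof (intro conjI allI impI)
  show "n \<le> j \<Longrightarrow> dimv (ivl a b :: 'k rep) j = 0" for j using assms by (simp add: dim_ivl)
  show "bmat (dimv (ivl a b :: 'k rep) (Suc k)) (dimv (ivl a b :: 'k rep) k) (arr (ivl a b) k)" for k
    unfolding bmat_def dim_ivl arr_ivl by auto
  fix i j assume ij: "(i,j) \<in> Z"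
  have "\<not> (i \<le> j \<and> a \<le> i \<and> j < b)"
  proof
    assume h: "i \<le> j \<and> a \<le> i \<and> j < b"
    have "r i \<le> j" using ij Z_iff by auto
    moreover have "r a \<le> r i" using h r_mono by auto
    ultimately show False using assms(2) h by auto
  qed
  then show "pmap (ivl a b :: 'k rep) i j = (\<lambda>_ _. 0)" by (auto simp: fun_eq_iff pmap_ivl)
qed

lemma filter_single: "filter (\<lambda>x. x = i \<and> C) [0..<m] = (if C \<and> i < m then [i] else [])"
  by (induction m) auto

lemma eJ_ivl:
  assumes "i < n"
  shows "eJ n Z i = (ivl (Suc i) (r i) :: 'k::field rep)"
proof -
  define B where "B = {(i',j). i' = i \<and> i < j \<and> j < n \<and> (i,j) \<notin> Z}"
  have pb: "pbasis n B j = (if i < j \<and> j < r i then [i] else [])" for j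
  proof (cases "j < n")
    case True
    have "((i',j) \<in> B) = (i' = i \<and> (i < j \<and> j < r i))" for i'
      unfolding B_def using True Z_iff[of i j] by auto
    then have "pbasis n B j = filter (\<lambda>x. x = i \<and> (i < j \<and> j < r i)) [0..<n]"
      unfolding pbasis_def using True by simp
    then show ?thesis using assms by (simp add: filter_single)
  next
    case False
    then show ?thesis unfolding pbasis_def using r_le_n[of i] by auto
  qed
  show ?thesis
    unfolding eJ_def B_def[symmetric] pathmod_def ivl_def pb
    by (auto simp: fun_eq_iff)
qed

lemma inj_ivl:
  assumes b1: "1 \<le> b" and bn: "b \<le> n"
  shows "is_injective n Z (ivl (Lf b) b :: 'k::field rep)"
proof -
  define l where "l = Lf b"
  define bb where "bb = b - 1"
  have bbs: "b = Suc bb" using b1 unfolding bb_def by simp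
  have lbb: "l \<le> bb" using Lf_le[OF b1 bn] unfolding l_def bb_def .
  have bbn: "bb < n" using bn bbs by simp
  have repI: "is_rep n Z (ivl l b :: 'k rep)"
    by (rule rep_ivl[OF bn]) (use Lf_iff[OF bn, of l] l_def in simp)
  have lm: "l \<ge> 1 \<Longrightarrow> (l - 1, bb) \<in> Z"
  proof -
    assume l1: "l \<ge> 1"
    have "\<not> (Lf b \<le> l - 1)" using l1 unfolding l_def by simp
    then have "r (l - 1) < b" using Lf_iff[OF bn, of "l - 1"] by simp
    then show ?thesis unfolding Z_iff using bbn bbs by simp
  qed
  show ?thesis
    unfolding is_injective_def l_def[symmetric]
  proof (intro conjI allI impI repI)
    fix X Y :: "'k rep" and \<iota> h
    assume rX: "is_rep n Z X" and rY: "is_rep n Z Y" and hi: "is_hom n X Y \<iota>" and mi: "is_mono X \<iota>"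
      and hh: "is_hom n X (ivl l b) h"
    have okX: "arrs_ok X" and okY: "arrs_ok Y" using rX rY by (auto intro: rep_arrs_ok)
    have bi: "bmat (dimv Y bb) (dimv X bb) (\<iota> bb)" using hi unfolding is_hom_def by blast
    have ib: "\<And>v. bvec (dimv X bb) v \<Longrightarrow> mvec (dimv X bb) (\<iota> bb) v = (\<lambda>_. 0) \<Longrightarrow> v = (\<lambda>_. 0)"
      using mi unfolding is_mono_def by blast
    obtain f where f: "\<forall>y<dimv X bb. (\<Sum>s<dimv Y bb. f s * \<iota> bb s y) = h bb 0 y"
      using row_extend[OF bi ib, of "\<lambda>y. h bb 0 y"] by blast
    define F where "F = (\<lambda>(x::nat) s. if x = 0 \<and> s < dimv Y bb then f s else (0::'k))"
    have bF: "bmat 1 (dimv Y bb) F" unfolding F_def bmat_def by auto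
    have bh: "\<And>j. bmat (dimv (ivl l b :: 'k rep) j) (dimv X j) (h j)" using hh unfolding is_hom_def by blast
    have Fi: "mmul (dimv Y bb) F (\<iota> bb) = h bb"
    proof (intro ext)
      fix x y
      show "mmul (dimv Y bb) F (\<iota> bb) x y = h bb x y"
      proof (cases "x = 0")
        case True
        show ?thesis
        proof (cases "y < dimv X bb")
          case True
          then show ?thesis using f \<open>x = 0\<close> unfolding mmul_def F_def by simp
        next
          case False
          then have "h bb x y = 0" using bh[of bb] unfolding bmat_def by auto
          moreover have "mmul (dimv Y bb) F (\<iota> bb) x y = 0"
            using bi False unfolding mmul_def bmat_def by auto
          ultimately show ?thesis by simp
        qed
      next
        case False
        then have "h bb x y = 0" using bh[of bb] unfolding bmat_def dim_ivl by auto
        moreover have "mmul (dimv Y bb) F (\<iota> bb) x y = 0" using False unfolding mmul_def F_def by auto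
        ultimately show ?thesis by simp
      qed
    qed
    define h' where "h' j = (if l \<le> j \<and> j < b then mmul (dimv Y bb) F (pmap Y j bb) else (\<lambda>_ _. 0))" for j
    have bh': "bmat (dimv (ivl l b :: 'k rep) j) (dimv Y j) (h' j)" for j
    proof (cases "l \<le> j \<and> j < b")
      case True
      then show ?thesis unfolding h'_def dim_ivl
        using bmat_mmul2[OF bF pmap_bmat[OF okY, of bb j]] by simp
    next
      case False
      then show ?thesis unfolding h'_def if_not_P[OF False] by (simp add: bmat_zero)
    qed
    have hom': "is_hom n Y (ivl l b) h'"
      unfolding is_hom_def
    proof (intro conjI allI impI)
      show "bmat (dimv (ivl l b :: 'k rep) j) (dimv Y j) (h' j)" for j by (rule bh')
      fix a assume an: "Suc a < n"
      show "mmul (dimv Y (Suc a)) (h' (Suc a)) (arr Y a) = mmul (dimv (ivl l b :: 'k rep) a) (arr (ivl l b) a) (h' a)"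
      proof (cases "l \<le> a \<and> Suc a < b")
        case True
        have "mmul (dimv Y (Suc a)) (h' (Suc a)) (arr Y a)
              = mmul (dimv Y (Suc a)) (mmul (dimv Y bb) F (pmap Y (Suc a) bb)) (arr Y a)"
          unfolding h'_def using True by simp
        also have "\<dots> = mmul (dimv Y bb) F (mmul (dimv Y (Suc a)) (pmap Y (Suc a) bb) (arr Y a))"
          by (rule mmul_assoc[symmetric])
        also have "\<dots> = mmul (dimv Y bb) F (pmap Y a bb)"
          using pmap_left[OF okY, of a bb] True bbs by simp
        also have "\<dots> = h' a" unfolding h'_def using True by simp
        also have "\<dots> = mmul 1 (idm 1) (h' a)"
          using mmul_idm_left[of 1 "dimv Y a" "h' a"] bh'[of a] True unfolding dim_ivl by simp
        also have "\<dots> = mmul (dimv (ivl l b :: 'k rep) a) (arr (ivl l b) a) (h' a)"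
        proof -
          have "arr (ivl l b :: 'k rep) a = idm 1" by (rule arr_ivl_idm) (use True in auto)
          then show ?thesis using True unfolding dim_ivl by simp
        qed
        finally show ?thesis .
      next
        case False
        show ?thesis
        proof (cases "Suc a = l")
          case True
          have l1: "l \<ge> 1" using True by simp
          have "(l - 1, bb) \<in> Z" using lm[OF l1] .
          then have z: "pmap Y a bb = (\<lambda>_ _. 0)" using rY True unfolding is_rep_def by auto
          have "mmul (dimv Y (Suc a)) (h' (Suc a)) (arr Y a)
              = mmul (dimv Y (Suc a)) (mmul (dimv Y bb) F (pmap Y (Suc a) bb)) (arr Y a)"
            unfolding h'_def using True lbb bbs by simp
          also have "\<dots> = mmul (dimv Y bb) F (mmul (dimv Y (Suc a)) (pmap Y (Suc a) bb) (arr Y a))"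
            by (rule mmul_assoc[symmetric])
          also have "\<dots> = mmul (dimv Y bb) F (pmap Y a bb)"
            using pmap_left[OF okY, of a bb] True lbb by simp
          also have "\<dots> = (\<lambda>_ _. 0)" unfolding z by (rule mmul_zero_r)
          also have "\<dots> = mmul (dimv (ivl l b :: 'k rep) a) (arr (ivl l b) a) (h' a)"
            unfolding h'_def using True by (simp add: mmul_zero_r)
          finally show ?thesis .
        next
          case False2: False
          have "h' (Suc a) = (\<lambda>_ _. 0)" unfolding h'_def using False False2 by auto
          moreover have "mmul (dimv (ivl l b :: 'k rep) a) (arr (ivl l b) a) (h' a) = (\<lambda>_ _. 0)"
          proof (cases "l \<le> a \<and> a < b")
            case True
            have "arr (ivl l b :: 'k rep) a = (\<lambda>_ _. 0)" by (rule arr_ivl_zero) (use False in auto)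
            then show ?thesis by (simp add: mmul_zero_l)
          next
            case False3: False
            then show ?thesis unfolding h'_def if_not_P[OF False3] by (simp add: mmul_zero_r)
          qed
          ultimately show ?thesis by (simp add: mmul_zero_l)
        qed
      qed
    qed
    have comp: "mmul (dimv Y j) (h' j) (\<iota> j) = h j" for j
    proof (cases "l \<le> j \<and> j < b")
      case True
      have jb: "j \<le> bb" using True bbs by simp
      have "mmul (dimv Y j) (h' j) (\<iota> j) = mmul (dimv Y j) (mmul (dimv Y bb) F (pmap Y j bb)) (\<iota> j)"
        unfolding h'_def using True by simp
      also have "\<dots> = mmul (dimv Y bb) F (mmul (dimv Y j) (pmap Y j bb) (\<iota> j))"
        by (rule mmul_assoc[symmetric])
      also have "mmul (dimv Y j) (pmap Y j bb) (\<iota> j) = mmul (dimv X bb) (\<iota> bb) (pmap X j bb)"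
        using hom_pmap[OF hi okX okY jb bbn] by simp
      also have "mmul (dimv Y bb) F (mmul (dimv X bb) (\<iota> bb) (pmap X j bb)) = mmul (dimv X bb) (mmul (dimv Y bb) F (\<iota> bb)) (pmap X j bb)"
        by (rule mmul_assoc)
      also have "\<dots> = mmul (dimv X bb) (h bb) (pmap X j bb)" unfolding Fi ..
      also have "\<dots> = mmul (dimv (ivl l b :: 'k rep) j) (pmap (ivl l b) j bb) (h j)"
        using hom_pmap[OF hh okX ok_ivl jb bbn] .
      also have "\<dots> = h j"
      proof -
        have "pmap (ivl l b :: 'k rep) j bb = idm 1" by (rule pmap_ivl_idm) (use True jb bbs in auto)
        then show ?thesis using True mmul_idm_left[of 1 "dimv X j" "h j"] bh[of j] unfolding dim_ivl by simp
      qed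
      finally show ?thesis .
    next
      case False
      have "bmat 0 (dimv X j) (h j)" using bh[of j] unfolding dim_ivl if_not_P[OF False] .
      then have "h j = (\<lambda>_ _. 0)" by (rule bmat0)
      then show ?thesis unfolding h'_def if_not_P[OF False] by (simp add: mmul_zero_l)
    qed
    show "\<exists>h'. is_hom n Y (ivl l b) h' \<and> (\<forall>j. mmul (dimv Y j) (h' j) (\<iota> j) = h j)"
      using hom' comp by blast
  qed
qed

end


definition ivlmap :: "nat \<Rightarrow> nat \<Rightarrow> nat \<Rightarrow> nat \<Rightarrow> nat \<Rightarrow> 'k::field" where
  "ivlmap c d = (\<lambda>j x y. if c \<le> j \<and> j < d \<and> x = 0 \<and> y = 0 then 1 else 0)"

lemma mvec_01: "mvec (if C then 1 else 0) A v = (if C then (\<lambda>x. A x 0 * v 0) else (\<lambda>_. (0::'k::field)))"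
  unfolding mvec_def by (cases C) (auto simp: fun_eq_iff)

lemma bvec_01: "bvec (if C then 1 else 0) v \<Longrightarrow> (\<forall>x. x \<noteq> 0 \<longrightarrow> v x = (0::'k::field)) \<and> (\<not> C \<longrightarrow> v 0 = 0)"
  unfolding bvec_def by (cases C) auto

lemma vec_eq0:
  fixes v :: "nat \<Rightarrow> 'k::field"
  assumes "\<forall>x. x \<noteq> 0 \<longrightarrow> v x = 0" "v 0 = 0" shows "v = (\<lambda>_. 0)"
proof (rule ext)
  fix x show "v x = 0" using assms by (cases "x = 0") auto
qed

lemma vec_eq1:
  fixes v :: "nat \<Rightarrow> 'k::field"
  assumes "\<forall>x. x \<noteq> 0 \<longrightarrow> v x = 0" shows "(\<lambda>x. if x = 0 then v 0 else 0) = v"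
proof (rule ext)
  fix x show "(if x = 0 then v 0 else 0) = v x" using assms by (cases "x = 0") auto
qed

lemma mmul_01: "mmul (if C then 1 else 0) A B x y = (if C then A x 0 * B 0 y else (0::'k::field))"
  unfolding mmul_def by (cases C) auto

lemma hom_ivlmap:
  assumes bm: "\<And>j. c \<le> j \<Longrightarrow> j < d \<Longrightarrow> a \<le> j \<and> j < b \<and> a' \<le> j \<and> j < b'"
    and cm: "\<And>k. (a \<le> k \<and> Suc k < b \<and> c \<le> Suc k \<and> Suc k < d) = (a' \<le> k \<and> Suc k < b' \<and> c \<le> k \<and> k < d)"
  shows "is_hom n (ivl a b :: 'k::field rep) (ivl a' b') (ivlmap c d)"
  unfolding is_hom_def
proof (intro conjI allI impI)
  show "bmat (dimv (ivl a' b' :: 'k rep) j) (dimv (ivl a b :: 'k rep) j) (ivlmap c d j)" for j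
    using bm unfolding bmat_def dim_ivl ivlmap_def by auto
  fix k
  have L: "mmul (dimv (ivl a b :: 'k rep) (Suc k)) (ivlmap c d (Suc k)) (arr (ivl a b) k) x y =
     (if x = 0 \<and> y = 0 \<and> (a \<le> k \<and> Suc k < b \<and> c \<le> Suc k \<and> Suc k < d) then 1 else 0)" for x y
    unfolding dim_ivl mmul_01 arr_ivl ivlmap_def by auto
  have R: "mmul (dimv (ivl a' b' :: 'k rep) k) (arr (ivl a' b') k) (ivlmap c d k) x y =
     (if x = 0 \<and> y = 0 \<and> (a' \<le> k \<and> Suc k < b' \<and> c \<le> k \<and> k < d) then 1 else 0)" for x y
    unfolding dim_ivl mmul_01 arr_ivl ivlmap_def by auto
  show "mmul (dimv (ivl a b :: 'k rep) (Suc k)) (ivlmap c d (Suc k)) (arr (ivl a b) k) =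
        mmul (dimv (ivl a' b' :: 'k rep) k) (arr (ivl a' b') k) (ivlmap c d k)"
  proof (intro ext)
    fix x y
    show "mmul (dimv (ivl a b :: 'k rep) (Suc k)) (ivlmap c d (Suc k)) (arr (ivl a b) k) x y =
        mmul (dimv (ivl a' b' :: 'k rep) k) (arr (ivl a' b') k) (ivlmap c d k) x y"
      unfolding L R cm[of k] ..
  qed
qed

lemma mono_ivlmap:
  assumes "\<And>j. a \<le> j \<Longrightarrow> j < b \<Longrightarrow> c \<le> j \<and> j < d"
  shows "is_mono (ivl a b :: 'k::field rep) (ivlmap c d)"
  unfolding is_mono_def
proof (intro allI impI)
  fix j and v :: "nat \<Rightarrow> 'k"
  assume bv: "bvec (dimv (ivl a b :: 'k rep) j) v" and mv: "mvec (dimv (ivl a b :: 'k rep) j) (ivlmap c d j) v = (\<lambda>_. 0)"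
  have v: "(\<forall>x. x \<noteq> 0 \<longrightarrow> v x = 0) \<and> (\<not> (a \<le> j \<and> j < b) \<longrightarrow> v 0 = 0)"
    using bvec_01[OF bv[unfolded dim_ivl]] .
  show "v = (\<lambda>_. 0)"
  proof (cases "a \<le> j \<and> j < b")
    case True
    then have "mvec (dimv (ivl a b :: 'k rep) j) (ivlmap c d j) v 0 = v 0"
      using assms unfolding dim_ivl mvec_01 ivlmap_def by auto
    then have "v 0 = 0" using mv by simp
    then show ?thesis using v vec_eq0 by blast
  next
    case False
    then show ?thesis using v vec_eq0 by blast
  qed
qed

context nak begin

lemma pos_dir:
  assumes i: "i < n" and eq: "Lf (r i) = Lf (Suc i)"
  shows "inj_dim_le1 n Z (ivl (Suc i) (r i) :: 'k::field rep)"
proof -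
  define r0 where "r0 = r i"
  define L where "L = Lf r0"
  have r0i: "Suc i \<le> r0" using r_gt[OF i] unfolding r0_def by simp
  have r0n: "r0 \<le> n" unfolding r0_def by (rule r_le_n)
  have Li: "L \<le> i" using Lf_le[of "Suc i"] i eq unfolding L_def r0_def by simp
  have I0: "is_injective n Z (ivl L r0 :: 'k rep)"
    unfolding L_def by (rule inj_ivl) (use r0i r0n in auto)
  have I1: "is_injective n Z (ivl L (Suc i) :: 'k rep)"
    unfolding L_def r0_def eq by (rule inj_ivl) (use i in auto)
  have hmu: "is_hom n (ivl (Suc i) r0 :: 'k rep) (ivl L r0) (ivlmap (Suc i) r0)"
    by (rule hom_ivlmap) (use Li in auto)
  have hpi: "is_hom n (ivl L r0 :: 'k rep) (ivl L (Suc i)) (ivlmap L (Suc i))"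
    by (rule hom_ivlmap) (use r0i in auto)
  have mmu: "is_mono (ivl (Suc i) r0 :: 'k rep) (ivlmap (Suc i) r0)"
    by (rule mono_ivlmap) auto
  have epi: "is_epi (ivl L r0 :: 'k rep) (ivl L (Suc i)) (ivlmap L (Suc i))"
    unfolding is_epi_def
  proof (intro allI impI)
    fix j and w :: "nat \<Rightarrow> 'k" assume bw: "bvec (dimv (ivl L (Suc i) :: 'k rep) j) w"
    have w: "(\<forall>x. x \<noteq> 0 \<longrightarrow> w x = 0) \<and> (\<not> (L \<le> j \<and> j < Suc i) \<longrightarrow> w 0 = 0)"
      using bvec_01[OF bw[unfolded dim_ivl]] .
    show "\<exists>v. bvec (dimv (ivl L r0 :: 'k rep) j) v \<and> mvec (dimv (ivl L r0 :: 'k rep) j) (ivlmap L (Suc i) j) v = w"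
    proof (cases "L \<le> j \<and> j < Suc i")
      case True
      have d1: "dimv (ivl L r0 :: 'k rep) j = 1" using True r0i unfolding dim_ivl by simp
      have "mvec (dimv (ivl L r0 :: 'k rep) j) (ivlmap L (Suc i) j) w = (\<lambda>x. if x = 0 then w 0 else 0)"
        unfolding d1 mvec_def ivlmap_def using True by (auto simp: fun_eq_iff)
      also have "\<dots> = w" using w vec_eq1 by blast
      finally have m: "mvec (dimv (ivl L r0 :: 'k rep) j) (ivlmap L (Suc i) j) w = w" .
      have "bvec (dimv (ivl L r0 :: 'k rep) j) w" using w unfolding d1 bvec_def by auto
      then show ?thesis using m by blast
    next
      case False
      then have "w = (\<lambda>_. 0)" using w vec_eq0 by blast
      then show ?thesis by (intro exI[of _ "\<lambda>_. 0"]) (simp add: bvec_def mvec_def)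
    qed
  qed
  have ex: "is_exact_at (ivl (Suc i) r0 :: 'k rep) (ivl L r0) (ivlmap (Suc i) r0) (ivlmap L (Suc i))"
    unfolding is_exact_at_def
  proof (intro allI impI)
    fix j and w :: "nat \<Rightarrow> 'k" assume bw: "bvec (dimv (ivl L r0 :: 'k rep) j) w"
    have w: "(\<forall>x. x \<noteq> 0 \<longrightarrow> w x = 0) \<and> (\<not> (L \<le> j \<and> j < r0) \<longrightarrow> w 0 = 0)"
      using bvec_01[OF bw[unfolded dim_ivl]] .
    show "(mvec (dimv (ivl L r0 :: 'k rep) j) (ivlmap L (Suc i) j) w = (\<lambda>_. 0)) =
          (\<exists>v. bvec (dimv (ivl (Suc i) r0 :: 'k rep) j) v \<and> mvec (dimv (ivl (Suc i) r0 :: 'k rep) j) (ivlmap (Suc i) r0 j) v = w)"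
    proof (cases "L \<le> j \<and> j < r0")
      case False
      then have w0: "w = (\<lambda>_. 0)" using w vec_eq0 by blast
      have l: "mvec (dimv (ivl L r0 :: 'k rep) j) (ivlmap L (Suc i) j) w = (\<lambda>_. 0)"
        unfolding w0 mvec_def by simp
      have "bvec (dimv (ivl (Suc i) r0 :: 'k rep) j) (\<lambda>_. 0) \<and> mvec (dimv (ivl (Suc i) r0 :: 'k rep) j) (ivlmap (Suc i) r0 j) (\<lambda>_. 0) = w"
        unfolding w0 bvec_def mvec_def by simp
      then show ?thesis using l by blast
    next
      case True
      show ?thesis
      proof (cases "j < Suc i")
        case True2: True
        have d0: "dimv (ivl (Suc i) r0 :: 'k rep) j = 0" using True2 unfolding dim_ivl by simp
        have l: "(mvec (dimv (ivl L r0 :: 'k rep) j) (ivlmap L (Suc i) j) w = (\<lambda>_. 0)) = (w 0 = 0)"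
        proof -
          have d1: "dimv (ivl L r0 :: 'k rep) j = 1" using True unfolding dim_ivl by simp
          have "mvec (dimv (ivl L r0 :: 'k rep) j) (ivlmap L (Suc i) j) w = (\<lambda>x. if x = 0 then w 0 else 0)"
            unfolding d1 mvec_def ivlmap_def using True True2 by (auto simp: fun_eq_iff)
          then show ?thesis by (auto simp: fun_eq_iff)
        qed
        have rr: "(\<exists>v. bvec (dimv (ivl (Suc i) r0 :: 'k rep) j) v \<and> mvec (dimv (ivl (Suc i) r0 :: 'k rep) j) (ivlmap (Suc i) r0 j) v = w) = (w 0 = 0)"
        proof
          assume "\<exists>v. bvec (dimv (ivl (Suc i) r0 :: 'k rep) j) v \<and> mvec (dimv (ivl (Suc i) r0 :: 'k rep) j) (ivlmap (Suc i) r0 j) v = w"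
          then obtain v where "mvec (dimv (ivl (Suc i) r0 :: 'k rep) j) (ivlmap (Suc i) r0 j) v = w" by blast
          then show "w 0 = 0" unfolding d0 mvec_def by auto
        next
          assume "w 0 = 0"
          then have "w = (\<lambda>_. 0)" using w vec_eq0 by blast
          then show "\<exists>v. bvec (dimv (ivl (Suc i) r0 :: 'k rep) j) v \<and> mvec (dimv (ivl (Suc i) r0 :: 'k rep) j) (ivlmap (Suc i) r0 j) v = w"
            by (intro exI[of _ "\<lambda>_. 0"]) (simp add: d0 bvec_def mvec_def)
        qed
        show ?thesis using l rr by simp
      next
        case False2: False
        have l: "mvec (dimv (ivl L r0 :: 'k rep) j) (ivlmap L (Suc i) j) w = (\<lambda>_. 0)"
          using False2 unfolding mvec_def ivlmap_def by simp
        have d1: "dimv (ivl (Suc i) r0 :: 'k rep) j = 1" using True False2 unfolding dim_ivl by simp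
        have "mvec (dimv (ivl (Suc i) r0 :: 'k rep) j) (ivlmap (Suc i) r0 j) w = (\<lambda>x. if x = 0 then w 0 else 0)"
          unfolding d1 mvec_def ivlmap_def using True False2 by (auto simp: fun_eq_iff)
        also have "\<dots> = w" using w vec_eq1 by blast
        finally have m: "mvec (dimv (ivl (Suc i) r0 :: 'k rep) j) (ivlmap (Suc i) r0 j) w = w" .
        have "bvec (dimv (ivl (Suc i) r0 :: 'k rep) j) w" using w unfolding d1 bvec_def by auto
        then have "bvec (dimv (ivl (Suc i) r0 :: 'k rep) j) w \<and> mvec (dimv (ivl (Suc i) r0 :: 'k rep) j) (ivlmap (Suc i) r0 j) w = w"
          using m by blast
        then show ?thesis using l by blast
      qed
    qed
  qed
  show ?thesis unfolding inj_dim_le1_def r0_def[symmetric]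
    using I0 I1 hmu hpi mmu epi ex by blast
qed

end


lemma col_mmul: "(\<lambda>x. mmul d A B x 0) = mvec d A (\<lambda>t. B t 0)"
  unfolding mmul_def mvec_def by simp

lemma mvec_diff: "mvec d A (u - z) = mvec d A u - mvec d A (z :: nat \<Rightarrow> 'k::field)"
  unfolding mvec_def by (auto simp: fun_eq_iff sum_subtractf algebra_simps)

lemma mvec_zero_mat: "mvec d (\<lambda>_ _. 0) v = (\<lambda>_. (0::'k::field))"
  unfolding mvec_def by simp

lemma exact_comp:
  assumes ex: "is_exact_at M N f g" and bf: "bmat (dimv N j) (dimv M j) (f j)"
  shows "mmul (dimv N j) (g j) (f j) = (\<lambda>_ _. (0::'k::field))"
proof (intro ext)
  fix x y
  define w where "w = (\<lambda>t. f j t y)"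
  have mm: "mmul (dimv N j) (g j) (f j) x y = mvec (dimv N j) (g j) w x"
    unfolding mmul_def mvec_def w_def by simp
  show "mmul (dimv N j) (g j) (f j) x y = 0"
  proof (cases "y < dimv M j")
    case True
    define e where "e = (\<lambda>t::nat. if t = y then (1::'k) else 0)"
    have be: "bvec (dimv M j) e" unfolding bvec_def e_def using True by auto
    have "mvec (dimv M j) (f j) e = w"
      unfolding mvec_def e_def w_def using True by (simp add: if_distrib sum.delta cong: if_cong)
    moreover have "bvec (dimv N j) w" using bf unfolding bvec_def w_def bmat_def by auto
    ultimately have "mvec (dimv N j) (g j) w = (\<lambda>_. 0)"
      using ex be unfolding is_exact_at_def by blast
    then show ?thesis using mm by simp
  next
    case False
    then have "w = (\<lambda>_. 0)" using bf unfolding w_def bmat_def by auto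
    then show ?thesis using mm unfolding mvec_def by simp
  qed
qed

context nak begin

lemma neg_dir:
  assumes i: "i < n" and idl: "inj_dim_le1 n Z (ivl (Suc i) (r i) :: 'k::field rep)"
  shows "Lf (r i) = Lf (Suc i)"
proof (rule ccontr)
  assume ne: "Lf (r i) \<noteq> Lf (Suc i)"
  define r0 where "r0 = r i"
  define L where "L = Lf r0"
  have r0i: "Suc i \<le> r0" using r_gt[OF i] unfolding r0_def by simp
  have r0n: "r0 \<le> n" unfolding r0_def by (rule r_le_n)
  have LSi: "Lf (Suc i) \<le> L" unfolding L_def by (rule Lf_mono) (use r0i r0n in auto)
  then have LSi2: "Lf (Suc i) < L" using ne unfolding L_def r0_def by simp
  then have L1: "1 \<le> L" by simp
  have Li: "L \<le> i" unfolding L_def using Lf_iff[OF r0n, of i] unfolding r0_def by simp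
  have r0i2: "Suc i < r0" using ne r0i unfolding r0_def by (cases "r i = Suc i") auto
  have rL1: "Suc i \<le> r (L - 1)"
  proof -
    have "Lf (Suc i) \<le> L - 1" using LSi2 by simp
    then show ?thesis using Lf_iff[of "Suc i" "L - 1"] i by simp
  qed
  have zL: "(L - 1, r0 - 1) \<in> Z"
  proof -
    have "\<not> (Lf r0 \<le> L - 1)" using L1 unfolding L_def by simp
    then have "r (L - 1) < r0" using Lf_iff[OF r0n, of "L - 1"] by simp
    then show ?thesis unfolding Z_iff using r0n r0i2 by arith
  qed
  have rL: "r0 \<le> r L" using Lf_iff[OF r0n, of L] unfolding L_def by simp
  obtain I0 I1 :: "'k rep" and \<mu> \<pi> where
    I0: "is_injective n Z I0" and I1: "is_injective n Z I1" and hmu: "is_hom n (ivl (Suc i) r0) I0 \<mu>"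
    and hpi: "is_hom n I0 I1 \<pi>" and mmu: "is_mono (ivl (Suc i) r0 :: 'k rep) \<mu>" and epi: "is_epi I0 I1 \<pi>"
    and ex: "is_exact_at (ivl (Suc i) r0 :: 'k rep) I0 \<mu> \<pi>"
    using idl unfolding inj_dim_le1_def r0_def by blast
  have rI0: "is_rep n Z I0" and rI1: "is_rep n Z I1" using I0 I1 unfolding is_injective_def by auto
  have okI0: "arrs_ok I0" and okI1: "arrs_ok I1" using rI0 rI1 by (auto intro: rep_arrs_ok)
  have rM: "is_rep n Z (ivl (Suc i) r0 :: 'k rep)"
    by (rule rep_ivl[OF r0n]) (use r_mono[of i "Suc i"] r0_def in simp)
  have rY1: "is_rep n Z (ivl L r0 :: 'k rep)" by (rule rep_ivl[OF r0n]) (use rL in simp)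
  have hi1: "is_hom n (ivl (Suc i) r0 :: 'k rep) (ivl L r0) (ivlmap (Suc i) r0)"
    by (rule hom_ivlmap) (use Li in auto)
  have mi1: "is_mono (ivl (Suc i) r0 :: 'k rep) (ivlmap (Suc i) r0)" by (rule mono_ivlmap) auto
  obtain h' where hh': "is_hom n (ivl L r0 :: 'k rep) I0 h'"
    and c1: "\<forall>j. mmul (dimv (ivl L r0 :: 'k rep) j) (h' j) (ivlmap (Suc i) r0 j) = \<mu> j"
    using I0 rM rY1 hi1 mi1 hmu unfolding is_injective_def by blast
  have bh': "bmat (dimv I0 j) (dimv (ivl L r0 :: 'k rep) j) (h' j)" for j
    using hh' unfolding is_hom_def by blast
  have bpi: "bmat (dimv I1 j) (dimv I0 j) (\<pi> j)" for j using hpi unfolding is_hom_def by blast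
  have bmu: "bmat (dimv I0 j) (dimv (ivl (Suc i) r0 :: 'k rep) j) (\<mu> j)" for j
    using hmu unfolding is_hom_def by blast
  have HP: "mmul (dimv I0 (Suc a)) (\<pi> (Suc a)) (arr I0 a) = mmul (dimv I1 a) (arr I1 a) (\<pi> a)"
    if "Suc a < n" for a using hpi that unfolding is_hom_def by blast
  have HH: "mmul (dimv (ivl L r0 :: 'k rep) (Suc a)) (h' (Suc a)) (arr (ivl L r0) a) = mmul (dimv I0 a) (arr I0 a) (h' a)"
    if "Suc a < n" for a using hh' that unfolding is_hom_def by blast
  have h'id: "mmul (dimv (ivl L r0 :: 'k rep) j) (h' j) (idm 1) = h' j" if "L \<le> j" "j < r0" for j
    using mmul_idm_right[of "dimv I0 j" 1 "h' j"] bh'[of j] that unfolding dim_ivl by simp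
  have chain: "mmul (dimv I1 a) (arr I1 a) (mmul (dimv I0 a) (\<pi> a) (h' a)) = mmul (dimv I0 (Suc a)) (\<pi> (Suc a)) (h' (Suc a))"
    if a1: "L \<le> a" and a2: "Suc a < r0" for a
  proof -
    have an: "Suc a < n" using a2 r0n by simp
    have y1: "arr (ivl L r0 :: 'k rep) a = idm 1" by (rule arr_ivl_idm) (use a1 a2 in auto)
    have "mmul (dimv I1 a) (arr I1 a) (mmul (dimv I0 a) (\<pi> a) (h' a))
        = mmul (dimv I0 a) (mmul (dimv I1 a) (arr I1 a) (\<pi> a)) (h' a)" by (rule mmul_assoc)
    also have "\<dots> = mmul (dimv I0 a) (mmul (dimv I0 (Suc a)) (\<pi> (Suc a)) (arr I0 a)) (h' a)"
      using HP[OF an] by simp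
    also have "\<dots> = mmul (dimv I0 (Suc a)) (\<pi> (Suc a)) (mmul (dimv I0 a) (arr I0 a) (h' a))"
      by (rule mmul_assoc[symmetric])
    also have "\<dots> = mmul (dimv I0 (Suc a)) (\<pi> (Suc a)) (mmul (dimv (ivl L r0 :: 'k rep) (Suc a)) (h' (Suc a)) (arr (ivl L r0) a))"
      using HH[OF an] by simp
    also have "\<dots> = mmul (dimv I0 (Suc a)) (\<pi> (Suc a)) (h' (Suc a))"
      using y1 h'id[of "Suc a"] a1 a2 by simp
    finally show ?thesis .
  qed
  have hmu_eq: "h' j = \<mu> j" if "Suc i \<le> j" "j < r0" for j
  proof -
    have im: "ivlmap (Suc i) r0 j = (idm 1 :: nat \<Rightarrow> nat \<Rightarrow> 'k)"
      using that by (auto simp: fun_eq_iff ivlmap_def idm_def)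
    have "\<mu> j = mmul (dimv (ivl L r0 :: 'k rep) j) (h' j) (ivlmap (Suc i) r0 j)" using c1 by simp
    also have "\<dots> = mmul (dimv (ivl L r0 :: 'k rep) j) (h' j) (idm 1)" unfolding im ..
    also have "\<dots> = h' j" using h'id[of j] that Li by simp
    finally show ?thesis by simp
  qed
  define h2 where "h2 j = (if L \<le> j \<and> j < Suc i then mmul (dimv I0 j) (\<pi> j) (h' j) else (\<lambda>_ _. 0))" for j
  have rX2: "is_rep n Z (ivl L (Suc i) :: 'k rep)" by (rule rep_ivl) (use i rL r0i in auto)
  have rY2: "is_rep n Z (ivl (L - 1) (Suc i) :: 'k rep)" by (rule rep_ivl) (use i rL1 in auto)
  have hi2: "is_hom n (ivl L (Suc i) :: 'k rep) (ivl (L - 1) (Suc i)) (ivlmap L (Suc i))"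
    by (rule hom_ivlmap) (use L1 in auto)
  have mi2: "is_mono (ivl L (Suc i) :: 'k rep) (ivlmap L (Suc i))" by (rule mono_ivlmap) auto
  have hh2: "is_hom n (ivl L (Suc i) :: 'k rep) I1 h2"
    unfolding is_hom_def
  proof (intro conjI allI impI)
    fix j
    show "bmat (dimv I1 j) (dimv (ivl L (Suc i) :: 'k rep) j) (h2 j)"
    proof (cases "L \<le> j \<and> j < Suc i")
      case True
      have "bmat (dimv I1 j) (dimv (ivl L r0 :: 'k rep) j) (mmul (dimv I0 j) (\<pi> j) (h' j))"
        by (rule bmat_mmul2[OF bpi bh'])
      then show ?thesis unfolding h2_def using True r0i unfolding dim_ivl by simp
    next
      case False
      show ?thesis unfolding h2_def if_not_P[OF False] by (rule bmat_zero)
    qed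
  next
    fix a assume an: "Suc a < n"
    show "mmul (dimv (ivl L (Suc i) :: 'k rep) (Suc a)) (h2 (Suc a)) (arr (ivl L (Suc i)) a) =
          mmul (dimv I1 a) (arr I1 a) (h2 a)"
    proof (cases "L \<le> a \<and> Suc a < Suc i")
      case True
      have x1: "arr (ivl L (Suc i) :: 'k rep) a = idm 1" by (rule arr_ivl_idm) (use True in auto)
      have b2: "bmat (dimv I1 (Suc a)) 1 (h2 (Suc a))"
        using bmat_mmul2[OF bpi[of "Suc a"] bh'[of "Suc a"]] True r0i unfolding h2_def dim_ivl by simp
      have "mmul (dimv (ivl L (Suc i) :: 'k rep) (Suc a)) (h2 (Suc a)) (arr (ivl L (Suc i)) a) = h2 (Suc a)"
        using mmul_idm_right[OF b2] x1 True unfolding dim_ivl by simp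
      also have "\<dots> = mmul (dimv I0 (Suc a)) (\<pi> (Suc a)) (h' (Suc a))" unfolding h2_def using True by simp
      also have "\<dots> = mmul (dimv I1 a) (arr I1 a) (mmul (dimv I0 a) (\<pi> a) (h' a))"
        using chain[of a] True r0i by simp
      also have "\<dots> = mmul (dimv I1 a) (arr I1 a) (h2 a)" unfolding h2_def using True by simp
      finally show ?thesis .
    next
      case False
      show ?thesis
      proof (cases "a = i")
        case True
        have "mmul (dimv I1 a) (arr I1 a) (h2 a) = mmul (dimv I0 (Suc i)) (\<pi> (Suc i)) (h' (Suc i))"
          unfolding h2_def using True Li chain[of i] r0i2 by simp
        also have "\<dots> = mmul (dimv I0 (Suc i)) (\<pi> (Suc i)) (\<mu> (Suc i))"
          using hmu_eq[of "Suc i"] r0i2 by simp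
        also have "\<dots> = (\<lambda>_ _. 0)" by (rule exact_comp[OF ex bmu])
        finally show ?thesis unfolding h2_def using True by (simp add: mmul_zero_l)
      next
        case False2: False
        show ?thesis
        proof (cases "Suc a = L")
          case True
          have "arr (ivl L (Suc i) :: 'k rep) a = (\<lambda>_ _. 0)" by (rule arr_ivl_zero) (use True in auto)
          moreover have "h2 a = (\<lambda>_ _. 0)" unfolding h2_def using True by auto
          ultimately show ?thesis by (simp add: mmul_zero_l mmul_zero_r)
        next
          case False3: False
          have "h2 (Suc a) = (\<lambda>_ _. 0)" unfolding h2_def using False False2 False3 by auto
          moreover have "h2 a = (\<lambda>_ _. 0)" unfolding h2_def using False False2 False3 by auto
          ultimately show ?thesis by (simp add: mmul_zero_l mmul_zero_r)
        qed
      qed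
    qed
  qed
  obtain h2' where hh2': "is_hom n (ivl (L - 1) (Suc i) :: 'k rep) I1 h2'"
    and c2: "\<forall>j. mmul (dimv (ivl (L - 1) (Suc i) :: 'k rep) j) (h2' j) (ivlmap L (Suc i) j) = h2 j"
    using I1 rX2 rY2 hi2 mi2 hh2 unfolding is_injective_def by blast
  have bh2': "bmat (dimv I1 j) (dimv (ivl (L - 1) (Suc i) :: 'k rep) j) (h2' j)" for j
    using hh2' unfolding is_hom_def by blast
  have Ln: "L < n" using Li i by simp
  have sL: "Suc (L - 1) = L" using L1 by simp
  define w where "w = (\<lambda>t. h2' (L - 1) t 0)"
  have bw: "bvec (dimv I1 (L - 1)) w" using bh2'[of "L - 1"] unfolding w_def bvec_def bmat_def by auto
  obtain z' where bz': "bvec (dimv I0 (L - 1)) z'" and pz': "mvec (dimv I0 (L - 1)) (\<pi> (L - 1)) z' = w"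
    using epi bw unfolding is_epi_def by blast
  define z where "z = (\<lambda>t. h' L t 0)"
  define u where "u = mvec (dimv I0 (L - 1)) (arr I0 (L - 1)) z'"
  have cl1: "mvec (dimv I0 L) (\<pi> L) u = mvec (dimv I0 L) (\<pi> L) z"
  proof -
    have "mvec (dimv I0 L) (\<pi> L) u = mvec (dimv I0 (L - 1)) (mmul (dimv I0 L) (\<pi> L) (arr I0 (L - 1))) z'"
      unfolding u_def mvec_mmul ..
    also have "mmul (dimv I0 L) (\<pi> L) (arr I0 (L - 1)) = mmul (dimv I1 (L - 1)) (arr I1 (L - 1)) (\<pi> (L - 1))"
      using HP[of "L - 1"] sL Ln by simp
    also have "mvec (dimv I0 (L - 1)) (mmul (dimv I1 (L - 1)) (arr I1 (L - 1)) (\<pi> (L - 1))) z' = mvec (dimv I1 (L - 1)) (arr I1 (L - 1)) w"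
      unfolding mvec_mmul pz' ..
    also have "\<dots> = (\<lambda>x. mmul (dimv I1 (L - 1)) (arr I1 (L - 1)) (h2' (L - 1)) x 0)"
      unfolding col_mmul w_def ..
    also have "mmul (dimv I1 (L - 1)) (arr I1 (L - 1)) (h2' (L - 1)) = mmul (dimv (ivl (L - 1) (Suc i) :: 'k rep) L) (h2' L) (arr (ivl (L - 1) (Suc i)) (L - 1))"
      using hh2' sL Ln unfolding is_hom_def by (metis)
    also have "\<dots> = h2' L"
    proof -
      have "arr (ivl (L - 1) (Suc i) :: 'k rep) (L - 1) = idm 1" by (rule arr_ivl_idm) (use sL Li in auto)
      then show ?thesis using mmul_idm_right[OF bh2'[of L]] Li unfolding dim_ivl by simp
    qed
    also have "\<dots> = mmul (dimv (ivl (L - 1) (Suc i) :: 'k rep) L) (h2' L) (ivlmap L (Suc i) L)"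
    proof -
      have "ivlmap L (Suc i) L = (idm 1 :: nat \<Rightarrow> nat \<Rightarrow> 'k)" using Li by (auto simp: fun_eq_iff ivlmap_def idm_def)
      then show ?thesis using mmul_idm_right[OF bh2'[of L]] Li unfolding dim_ivl by simp
    qed
    also have "\<dots> = h2 L" using c2 by simp
    also have "\<dots> = mmul (dimv I0 L) (\<pi> L) (h' L)" unfolding h2_def using Li by simp
    finally show ?thesis unfolding col_mmul z_def .
  qed
  have uz: "u = z"
  proof -
    have bu: "bvec (dimv I0 L) (u - z)"
      unfolding bvec_def
    proof (intro allI impI)
      fix x assume x: "dimv I0 L \<le> x"
      have ba: "bmat (dimv I0 L) (dimv I0 (L - 1)) (arr I0 (L - 1))"
        using okI0 sL unfolding arrs_ok_def by metis
      have "u x = 0" unfolding u_def mvec_def using ba x unfolding bmat_def by simp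
      moreover have "z x = 0" unfolding z_def using bh'[of L] x unfolding bmat_def by simp
      ultimately show "(u - z) x = 0" by simp
    qed
    have "mvec (dimv I0 L) (\<pi> L) (u - z) = (\<lambda>_. 0)" using cl1 unfolding mvec_diff by (simp add: fun_eq_iff)
    then obtain v where "bvec (dimv (ivl (Suc i) r0 :: 'k rep) L) v" "mvec (dimv (ivl (Suc i) r0 :: 'k rep) L) (\<mu> L) v = u - z"
      using ex bu unfolding is_exact_at_def by blast
    moreover have "dimv (ivl (Suc i) r0 :: 'k rep) L = 0" using Li unfolding dim_ivl by simp
    ultimately have "u - z = (\<lambda>_. 0)" unfolding mvec_def by simp
    then show ?thesis by (simp add: fun_eq_iff)
  qed
  have cl3: "mvec (dimv I0 L) (pmap I0 L (r0 - 1)) z = (\<lambda>_. 0)"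
  proof -
    have "pmap I0 (L - 1) (r0 - 1) = (\<lambda>_ _. 0)" using rI0 zL unfolding is_rep_def by blast
    moreover have "pmap I0 (L - 1) (r0 - 1) = mmul (dimv I0 L) (pmap I0 L (r0 - 1)) (arr I0 (L - 1))"
      using pmap_left[OF okI0, of "L - 1" "r0 - 1"] sL Li r0i2 by simp
    ultimately have eqz: "mmul (dimv I0 L) (pmap I0 L (r0 - 1)) (arr I0 (L - 1)) = (\<lambda>_ _. 0)"
      by simp
    have "mvec (dimv I0 (L - 1)) (mmul (dimv I0 L) (pmap I0 L (r0 - 1)) (arr I0 (L - 1))) z' = (\<lambda>_. 0)"
      unfolding eqz by (rule mvec_zero_mat)
    then show ?thesis unfolding mvec_mmul u_def[symmetric] uz .
  qed
  have cl4: "mvec (dimv I0 L) (pmap I0 L (r0 - 1)) z = (\<lambda>x. \<mu> (r0 - 1) x 0)"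
  proof -
    have rn: "r0 - 1 < n" using r0n r0i by simp
    have "mvec (dimv I0 L) (pmap I0 L (r0 - 1)) z = (\<lambda>x. mmul (dimv I0 L) (pmap I0 L (r0 - 1)) (h' L) x 0)"
      unfolding col_mmul z_def ..
    also have "mmul (dimv I0 L) (pmap I0 L (r0 - 1)) (h' L) = mmul (dimv (ivl L r0 :: 'k rep) (r0 - 1)) (h' (r0 - 1)) (pmap (ivl L r0) L (r0 - 1))"
      using hom_pmap[OF hh' ok_ivl okI0, of L "r0 - 1"] Li r0i2 rn by simp
    also have "pmap (ivl L r0 :: 'k rep) L (r0 - 1) = idm 1" by (rule pmap_ivl_idm) (use Li r0i2 in auto)
    also have "mmul (dimv (ivl L r0 :: 'k rep) (r0 - 1)) (h' (r0 - 1)) (idm 1) = h' (r0 - 1)"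
      using h'id[of "r0 - 1"] Li r0i2 by simp
    also have "h' (r0 - 1) = \<mu> (r0 - 1)" using hmu_eq[of "r0 - 1"] r0i2 by simp
    finally show ?thesis .
  qed
  define e0 where "e0 = (\<lambda>t::nat. if t = 0 then (1::'k) else 0)"
  have d1: "dimv (ivl (Suc i) r0 :: 'k rep) (r0 - 1) = 1" using r0i2 unfolding dim_ivl by simp
  have be0: "bvec (dimv (ivl (Suc i) r0 :: 'k rep) (r0 - 1)) e0" unfolding d1 bvec_def e0_def by auto
  have "mvec (dimv (ivl (Suc i) r0 :: 'k rep) (r0 - 1)) (\<mu> (r0 - 1)) e0 = (\<lambda>x. \<mu> (r0 - 1) x 0)"
    unfolding d1 mvec_def e0_def by simp
  also have "\<dots> = (\<lambda>_. 0)" using cl3 cl4 by simp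
  finally have "e0 = (\<lambda>_. 0)" using mmu be0 unfolding is_mono_def by blast
  then show False unfolding e0_def by (metis one_neq_zero)
qed

lemma idl_iff:
  assumes i: "i < n"
  shows "inj_dim_le1 n Z (eJ n Z i :: 'k::field rep) \<longleftrightarrow> Lf (r i) = Lf (Suc i)"
  using pos_dir[OF i] neg_dir[OF i] eJ_ivl[OF i] by metis

end


context nak begin

lemma special_char:
  assumes "special p q"
  shows "p < n \<and> Lf (r p) \<noteq> Lf (Suc p) \<and> q = Lf (r p) - 1"
proof -
  have s: "q < p" "p < r q" "r q < r p" "r p \<le> r (Suc q)" using assms unfolding special_def by auto
  have pn: "p < n" using special_lt[OF assms] by simp
  have rpn: "r p \<le> n" by (rule r_le_n)
  have a1: "Lf (r p) \<le> Suc q" using Lf_iff[OF rpn, of "Suc q"] s by simp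
  have a2: "\<not> Lf (r p) \<le> q" using Lf_iff[OF rpn, of q] s by simp
  have a3: "Lf (Suc p) \<le> q" using Lf_iff[of "Suc p" q] pn s by simp
  show ?thesis using a1 a2 a3 pn by simp
qed

lemma special_of:
  assumes p: "p < n" and ne: "Lf (r p) \<noteq> Lf (Suc p)"
  shows "special p (Lf (r p) - 1)"
proof -
  define L where "L = Lf (r p)"
  have rpn: "r p \<le> n" by (rule r_le_n)
  have rp: "Suc p \<le> r p" using r_gt[OF p] by simp
  have "Lf (Suc p) \<le> L" unfolding L_def by (rule Lf_mono[OF rp rpn])
  then have lt: "Lf (Suc p) < L" using ne unfolding L_def by simp
  then have L1: "1 \<le> L" by simp
  have Lp: "L \<le> p" using Lf_iff[OF rpn, of p] unfolding L_def by simp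
  have b1: "Suc p \<le> r (L - 1)"
  proof -
    have "Lf (Suc p) \<le> L - 1" using lt by simp
    then show ?thesis using Lf_iff[of "Suc p" "L - 1"] p by simp
  qed
  have b2: "r (L - 1) < r p"
  proof -
    have "\<not> (L \<le> L - 1)" using L1 by simp
    then show ?thesis using Lf_iff[OF rpn, of "L - 1"] unfolding L_def by simp
  qed
  have b3: "r p \<le> r (Suc (L - 1))" using Lf_iff[OF rpn, of L] L1 unfolding L_def by simp
  show ?thesis unfolding special_def L_def[symmetric] using Lp L1 b1 b2 b3 by simp
qed

lemma card_Spec: "card Spec = card {p. p < n \<and> Lf (r p) \<noteq> Lf (Suc p)}"
proof (rule bij_betw_same_card)
  show "bij_betw fst Spec {p. p < n \<and> Lf (r p) \<noteq> Lf (Suc p)}"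
    unfolding bij_betw_def
  proof
    show "inj_on fst Spec"
    proof (rule inj_onI)
      fix x y assume "x \<in> Spec" "y \<in> Spec" "fst x = fst y"
      then show "x = y" unfolding Spec_def using special_char
        by (metis (mono_tags, lifting) case_prodD mem_Collect_eq prod.collapse)
    qed
    show "fst ` Spec = {p. p < n \<and> Lf (r p) \<noteq> Lf (Suc p)}"
    proof
      show "fst ` Spec \<subseteq> {p. p < n \<and> Lf (r p) \<noteq> Lf (Suc p)}"
        unfolding Spec_def using special_char by auto
      show "{p. p < n \<and> Lf (r p) \<noteq> Lf (Suc p)} \<subseteq> fst ` Spec"
      proof
        fix p assume "p \<in> {p. p < n \<and> Lf (r p) \<noteq> Lf (Suc p)}"
        then have "(p, Lf (r p) - 1) \<in> Spec" unfolding Spec_def using special_of by auto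
        then show "p \<in> fst ` Spec" by force
      qed
    qed
  qed
qed

lemma final:
  "dim_Ext1 n Z (radJ n Z :: 'k::field rep) (radJ n Z)
     = n - card {i. i < n \<and> inj_dim_le1 n Z (eJ n Z i :: 'k rep)}"
proof -
  have e: "{i. i < n \<and> inj_dim_le1 n Z (eJ n Z i :: 'k rep)} = {i. i < n \<and> Lf (r i) = Lf (Suc i)}"
    using idl_iff by blast
  have part: "card {i. i < n \<and> Lf (r i) = Lf (Suc i)} + card {p. p < n \<and> Lf (r p) \<noteq> Lf (Suc p)} = n"
  proof -
    have "{i. i < n \<and> Lf (r i) = Lf (Suc i)} \<union> {p. p < n \<and> Lf (r p) \<noteq> Lf (Suc p)} = {..<n}" by auto
    moreover have "{i. i < n \<and> Lf (r i) = Lf (Suc i)} \<inter> {p. p < n \<and> Lf (r p) \<noteq> Lf (Suc p)} = {}" by auto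
    ultimately show ?thesis
      using card_Un_disjoint[of "{i. i < n \<and> Lf (r i) = Lf (Suc i)}" "{p. p < n \<and> Lf (r p) \<noteq> Lf (Suc p)}"]
      by simp
  qed
  show ?thesis unfolding dimExt card_Spec e using part by simp
qed

end

theorem mainTheorem8:
  fixes n :: nat and Z :: "(nat \<times> nat) set"
  assumes "1 \<le> n" and "lin_nakayama_ideal n Z"
  shows "dim_Ext1 n Z (radJ n Z :: 'k::field rep) (radJ n Z)
           = n - card {i. i < n \<and> inj_dim_le1 n Z (eJ n Z i :: 'k rep)}"
proof -
  interpret nak n Z using assms by unfold_locales
  show ?thesis by (rule final)
qed

end
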